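(* Let $0\le\alpha<1$, $\mu\le\mu(\alpha)=\frac{(1-\alpha)^2}{4}$, $a_1,a_2\in\mathbb{R}$, and let $\alpha_1,\alpha_2$ be the eigenvalues of $A=\begin{pmatrix}0&a_1\\1&a_2\end{pmatrix}$ (labelled as in the context). Assume $$\lambda_{\alpha,\mu,n}-\lambda_{\alpha,\mu,l}\neq\alpha_1-\alpha_2\quad\text{for all }n,l\in\mathbb{N}^*,\ n\neq l.$$ Then the family $\{\lambda_{\alpha,\mu,n}-\alpha_1+\alpha_2,\ \lambda_{\alpha,\mu,n}\}_{n\ge1}=\{\lambda_{\alpha,\mu,n}+\alpha_2-\alpha_1: n\ge1\}\cup\{\lambda_{\alpha,\mu,n}:n\ge1\}$ can be arranged into a sequence $(\Lambda_{\alpha,\mu,n})_{n\ge1}$ of complex numbers satisfying: (1) $\Lambda_{\alpha,\mu,n}\neq\Lambda_{\alpha,\mu,m}$ for all $n\neq m$; (2) $\Re(\Lambda_{\alpha,\mu,n})>0$ for all $n\ge1$; (3) there is $\delta>0$ with $|\Im(\Lambda_{\alpha,\mu,n})|\le\delta\sqrt{\Re(\Lambda_{\alpha,\mu,n})}$ for all $n\ge1$; (4) $|\Lambda_{\alpha,\mu,n}|\le|\Lambda_{\alpha,\mu,n+1}|$ for all $n\ge1$; (5) there are $\varrho,q>0$ with $|\Lambda_{\alpha,\mu,n}-\Lambda_{\alpha,\mu,m}|\ge\varrho|n^2-m^2|$ for all $n,m$ with $|n-m|\ge q$, and $\inf_{n\neq m,\,|n-m|<q}|\Lambda_{\alpha,\mu,n}-\Lambda_{\alpha,\mu,m}|>0$;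 (6) there are $p,s>0$ with $|p\sqrt r-\mathcal N(r)|\le s$ for all $r>0$, where $\mathcal N(r)=\#\{n:|\Lambda_{\alpha,\mu,n}|\le r\}$.
   Context: $\nu(\alpha,\mu)=\frac{2}{2-\alpha}\sqrt{\mu(\alpha)-\mu}$, $(j_{\nu,n})_{n\ge1}$ is the increasing sequence of positive zeros of the Bessel function $J_\nu$, and $\lambda_{\alpha,\mu,n}=\left(\frac{2-\alpha}{2}\right)^2 j_{\nu(\alpha,\mu),n}^2$ (the Dirichlet eigenvalues of $-(x^\alpha\Phi')'-\mu x^{\alpha-2}\Phi$ on $(0,1)$). Labelling of eigenvalues of $A$: if $a_2^2+4a_1>0$, $\alpha_1=\frac12(a_2-\sqrt{a_2^2+4a_1})$, $\alpha_2=\frac12(a_2+\sqrt{a_2^2+4a_1})$; if $a_2^2+4a_1<0$, $\alpha_1=\frac12(a_2+i\sqrt{-(a_2^2+4a_1)})$, $\alpha_2=\frac12(a_2-i\sqrt{-(a_2^2+4a_1)})$; if $a_2^2+4a_1=0$, $\alpha_1=\alpha_2=a_2/2$ (in which case the family reduces to $\{\lambda_{\alpha,\mu,n}\}_{n\ge1}$). *)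

theory Defs
  imports "HOL-Analysis.Analysis"
begin

definition besselJ :: "real \<Rightarrow> real \<Rightarrow> real" where
  "besselJ nu x = (\<Sum>k. (-1) ^ k / (fact k * Gamma (real k + nu + 1)) * (x / 2) powr (2 * real k + nu))"

text \<open>The n-th positive zero (n \<ge> 1) of J_nu, in increasing order:
  the positive zero having exactly n-1 positive zeros below it.\<close>
definition bessel_zero :: "real \<Rightarrow> nat \<Rightarrow> real" where
  "bessel_zero nu n = (THE x. 0 < x \<and> besselJ nu x = 0 \<and>
      card {y. 0 < y \<and> y < x \<and> besselJ nu y = 0} = n - 1)"

definition mu_crit :: "real \<Rightarrow> real" where
  "mu_crit alpha = (1 - alpha)^2 / 4"

definition nu_of :: "real \<Rightarrow> real \<Rightarrow> real" where
  "nu_of alpha mu = 2 / (2 - alpha) * sqrt (mu_crit alpha - mu)"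

definition lam :: "real \<Rightarrow> real \<Rightarrow> nat \<Rightarrow> real" where
  "lam alpha mu n = ((2 - alpha) / 2)^2 * (bessel_zero (nu_of alpha mu) n)^2"

text \<open>Eigenvalues of A = [[0,a1],[1,a2]], labelled as in the paper.\<close>
definition eig1 :: "real \<Rightarrow> real \<Rightarrow> complex" where
  "eig1 a1 a2 = (if a2^2 + 4*a1 > 0 then complex_of_real ((a2 - sqrt (a2^2 + 4*a1)) / 2)
     else if a2^2 + 4*a1 < 0 then Complex (a2/2) (sqrt (-(a2^2 + 4*a1)) / 2)
     else complex_of_real (a2 / 2))"

definition eig2 :: "real \<Rightarrow> real \<Rightarrow> complex" where
  "eig2 a1 a2 = (if a2^2 + 4*a1 > 0 then complex_of_real ((a2 + sqrt (a2^2 + 4*a1)) / 2)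
     else if a2^2 + 4*a1 < 0 then Complex (a2/2) (- sqrt (-(a2^2 + 4*a1)) / 2)
     else complex_of_real (a2 / 2))"

end

theory Submission
  imports Defs "HOL-Complex_Analysis.Complex_Analysis"
begin

definition cc :: "real \<Rightarrow> nat \<Rightarrow> real" where
  "cc nu k = (-1) ^ k / (fact k * Gamma (real k + nu + 1) * 4 ^ k)"

definition GG :: "real \<Rightarrow> 'a::{real_normed_field,banach} \<Rightarrow> 'a" where
  "GG nu z = (\<Sum>k. of_real (cc nu k) * z ^ k)"

lemma cc_rec:
  assumes "nu \<ge> 0"
  shows "cc nu (Suc k) = - cc nu k / (4 * (real k + 1) * (real k + nu + 1))"
proof -
  have g: "Gamma (real (Suc k) + nu + 1) = (real k + nu + 1) * Gamma (real k + nu + 1)"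
  proof -
    have "real (Suc k) + nu + 1 = (real k + nu + 1) + 1" by simp
    moreover have "real k + nu + 1 \<notin> \<int>\<^sub>\<le>\<^sub>0" using assms
      by (auto elim!: nonpos_Ints_cases)
    ultimately show ?thesis using Gamma_plus1 by metis
  qed
  have pos: "Gamma (real k + nu + 1) > 0" using assms by simp
  show ?thesis unfolding cc_def g using pos assms
    by (simp add: field_simps add_pos_nonneg)
qed

lemma cc_0: "cc nu 0 = 1 / Gamma (nu + 1)"
  by (simp add: cc_def)

lemma summable_cc:
  fixes z :: "'a::{real_normed_field,banach}"
  assumes "nu \<ge> 0"
  shows "summable (\<lambda>k. of_real (cc nu k) * z ^ k)"
proof (rule summable_ratio_test[where c = "1/2" and N = "nat \<lceil>norm z\<rceil>"])
  fix n assume n: "n \<ge> nat \<lceil>norm z\<rceil>"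
  have nz: "norm z \<le> real n" using n by linarith
  have D: "4 * (real n + 1) * (real n + nu + 1) > 0" using assms by (simp add: add_pos_nonneg)
  have "norm (of_real (cc nu (Suc n)) * z ^ Suc n) = \<bar>cc nu (Suc n)\<bar> * (norm z ^ n * norm z)"
    by (simp add: norm_mult norm_power)
  also have "\<bar>cc nu (Suc n)\<bar> = \<bar>cc nu n\<bar> / (4 * (real n + 1) * (real n + nu + 1))"
    using assms D by (simp add: cc_rec abs_divide)
  finally have "norm (of_real (cc nu (Suc n)) * z ^ Suc n) = \<bar>cc nu n\<bar> * norm z ^ n * (norm z / (4 * (real n + 1) * (real n + nu + 1)))"
    by simp
  also have "\<dots> \<le> \<bar>cc nu n\<bar> * norm z ^ n * (1/2)"
  proof (rule mult_left_mono)
    have "norm z \<le> 4 * (real n + 1) * (real n + nu + 1) / 2"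
    proof -
      have "real n \<le> 1 * (real n + nu + 1)" using assms by simp
      also have "\<dots> \<le> (real n + 1) * (real n + nu + 1)"
        by (rule mult_right_mono) (use assms in simp_all)
      finally have "real n \<le> (real n + 1) * (real n + nu + 1)" .
      then show ?thesis using nz by linarith
    qed
    then show "norm z / (4 * (real n + 1) * (real n + nu + 1)) \<le> 1/2"
      using assms by (simp add: divide_simps)
  qed simp
  also have "\<dots> = 1/2 * norm (of_real (cc nu n) * z ^ n)"
    by (simp add: norm_mult norm_power)
  finally show "norm (of_real (cc nu (Suc n)) * z ^ Suc n) \<le> 1/2 * norm (of_real (cc nu n) * z ^ n)" .
qed simp


definition GR :: "real \<Rightarrow> real \<Rightarrow> real" where
  "GR nu t = (\<Sum>k. cc nu k * t ^ k)"
definition G1 :: "real \<Rightarrow> real \<Rightarrow> real" where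
  "G1 nu t = (\<Sum>k. diffs (cc nu) k * t ^ k)"
definition G2 :: "real \<Rightarrow> real \<Rightarrow> real" where
  "G2 nu t = (\<Sum>k. diffs (diffs (cc nu)) k * t ^ k)"

lemma summable_GR: "nu \<ge> 0 \<Longrightarrow> summable (\<lambda>k. cc nu k * (t::real) ^ k)"
  using summable_cc[of nu t] by simp

lemma summable_G1: "nu \<ge> 0 \<Longrightarrow> summable (\<lambda>k. diffs (cc nu) k * (t::real) ^ k)"
  by (rule termdiff_converges_all) (rule summable_GR)

lemma summable_G2: "nu \<ge> 0 \<Longrightarrow> summable (\<lambda>k. diffs (diffs (cc nu)) k * (t::real) ^ k)"
  by (rule termdiff_converges_all) (rule summable_G1)

lemma GR_deriv: "nu \<ge> 0 \<Longrightarrow> (GR nu has_real_derivative G1 nu t) (at t)"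
  unfolding GR_def G1_def
  by (rule termdiffs_strong_converges_everywhere) (rule summable_GR)

lemma G1_deriv: "nu \<ge> 0 \<Longrightarrow> (G1 nu has_real_derivative G2 nu t) (at t)"
  unfolding G2_def G1_def
  by (rule termdiffs_strong_converges_everywhere) (rule summable_G1)

lemma G_ode:
  assumes nu: "nu \<ge> 0"
  shows "4 * t * G2 nu t + 4 * (nu + 1) * G1 nu t + GR nu t = 0"
proof -
  define a where "a = cc nu"
  define f where "f = (\<lambda>m. real m * diffs a m * t ^ m)"
  have s2: "(\<lambda>n. diffs (diffs a) n * t ^ n) sums G2 nu t"
    unfolding a_def G2_def using summable_G2[OF nu] by (simp add: summable_sums)
  have s1: "(\<lambda>n. diffs a n * t ^ n) sums G1 nu t"
    unfolding a_def G1_def using summable_G1[OF nu] by (simp add: summable_sums)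
  have s0: "(\<lambda>n. a n * t ^ n) sums GR nu t"
    unfolding a_def GR_def using summable_GR[OF nu] by (simp add: summable_sums)
  have "(\<lambda>n. t * (diffs (diffs a) n * t ^ n)) sums (t * G2 nu t)"
    by (rule sums_mult[OF s2])
  moreover have "(\<lambda>n. t * (diffs (diffs a) n * t ^ n)) = (\<lambda>n. f (Suc n))"
    by (auto simp: f_def diffs_def algebra_simps)
  ultimately have "(\<lambda>n. f (Suc n)) sums (t * G2 nu t)" by simp
  moreover have "f 0 = 0" by (simp add: f_def)
  ultimately have sf: "f sums (t * G2 nu t)" using sums_Suc_iff[of f "t * G2 nu t"] by simp
  have "(\<lambda>n. 4 * f n + 4 * (nu + 1) * (diffs a n * t ^ n) + a n * t ^ n) sums
         (4 * (t * G2 nu t) + 4 * (nu + 1) * G1 nu t + GR nu t)"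
    by (intro sums_add sums_mult sf s1 s0)
  moreover have "(\<lambda>n. 4 * f n + 4 * (nu + 1) * (diffs a n * t ^ n) + a n * t ^ n) = (\<lambda>n. 0)"
  proof
    fix n
    have "a (Suc n) = - a n / (4 * (real n + 1) * (real n + nu + 1))"
      unfolding a_def by (rule cc_rec[OF nu])
    moreover have "(real n + 1) * (real n + nu + 1) > 0" using nu by (simp add: add_pos_nonneg)
    ultimately have z: "4 * (real n + 1) * (real n + nu + 1) * a (Suc n) + a n = 0"
      by (simp add: field_simps)
    have "4 * f n + 4 * (nu + 1) * (diffs a n * t ^ n) + a n * t ^ n
        = t ^ n * (4 * (real n + 1) * (real n + nu + 1) * a (Suc n) + a n)"
      unfolding f_def diffs_def by (simp add: algebra_simps)
    then show "4 * f n + 4 * (nu + 1) * (diffs a n * t ^ n) + a n * t ^ n = 0"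
      using z by simp
  qed
  ultimately have "(\<lambda>n. 0::real) sums (4 * (t * G2 nu t) + 4 * (nu + 1) * G1 nu t + GR nu t)"
    by simp
  then show ?thesis using sums_unique[OF sums_zero] by (simp add: sums_iff mult.assoc)
qed


lemma besselJ_eq:
  assumes nu: "nu \<ge> 0" and x: "x > 0"
  shows "besselJ nu x = (x/2) powr nu * GR nu (x^2)"
proof -
  have "(\<lambda>k. (-1) ^ k / (fact k * Gamma (real k + nu + 1)) * (x / 2) powr (2 * real k + nu))
      = (\<lambda>k. (x/2) powr nu * (cc nu k * (x^2) ^ k))"
  proof
    fix k
    have "(x / 2) powr (2 * real k + nu) = (x/2) powr nu * (x/2) ^ (2*k)"
      using x by (simp add: powr_add powr_realpow[symmetric] mult.commute)
    also have "(x/2) ^ (2*k) = (x^2) ^ k / 4 ^ k"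
      by (simp add: power_mult power_divide)
    finally have e: "(x / 2) powr (2 * real k + nu) = (x/2) powr nu * ((x^2) ^ k / 4 ^ k)" .
    show "(-1) ^ k / (fact k * Gamma (real k + nu + 1)) * (x / 2) powr (2 * real k + nu)
       = (x/2) powr nu * (cc nu k * (x^2) ^ k)"
      unfolding e cc_def by (simp add: field_simps)
  qed
  then show ?thesis unfolding besselJ_def GR_def
    by (simp add: suminf_mult[OF summable_GR[OF nu]])
qed

definition uu :: "real \<Rightarrow> real \<Rightarrow> real" where
  "uu nu x = x powr (nu + 1/2) * GR nu (x^2)"
definition up :: "real \<Rightarrow> real \<Rightarrow> real" where
  "up nu x = (nu + 1/2) * x powr (nu - 1/2) * GR nu (x^2) + x powr (nu + 1/2) * (G1 nu (x^2) * (2 * x))"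
definition qq :: "real \<Rightarrow> real \<Rightarrow> real" where
  "qq nu x = 1 - (nu^2 - 1/4) / x^2"

lemma uu_zero_iff: "nu \<ge> 0 \<Longrightarrow> x > 0 \<Longrightarrow> uu nu x = 0 \<longleftrightarrow> besselJ nu x = 0"
  by (simp add: uu_def besselJ_eq)

lemma uu_deriv:
  assumes nu: "nu \<ge> 0" and x: "x > 0"
  shows "(uu nu has_real_derivative up nu x) (at x)"
proof -
  have sq: "((\<lambda>x. x^2) has_real_derivative 2*x) (at x)" by (auto intro!: derivative_eq_intros)
  have dG: "((\<lambda>x. GR nu (x^2)) has_real_derivative G1 nu (x^2) * (2 * x)) (at x)"
    using DERIV_chain2[OF GR_deriv[OF nu] sq] by simp
  have dP: "((\<lambda>x. x powr (nu + 1/2)) has_real_derivative (nu + 1/2) * x powr (nu + 1/2 - 1)) (at x)"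
    by (rule has_real_derivative_powr[OF x])
  have "(uu nu has_real_derivative (nu + 1/2) * x powr (nu + 1/2 - 1) * GR nu (x^2) + G1 nu (x^2) * (2 * x) * x powr (nu + 1/2)) (at x)"
    unfolding uu_def by (rule DERIV_mult[OF dP dG])
  moreover have "nu + 1/2 - 1 = nu - 1/2" by simp
  ultimately show ?thesis unfolding up_def by (simp add: algebra_simps)
qed

lemma up_deriv:
  assumes nu: "nu \<ge> 0" and x: "x > 0"
  shows "(up nu has_real_derivative (- qq nu x * uu nu x)) (at x)"
proof -
  have sq: "((\<lambda>x. x^2) has_real_derivative 2*x) (at x)" by (auto intro!: derivative_eq_intros)
  have dG: "((\<lambda>x. GR nu (x^2)) has_real_derivative G1 nu (x^2) * (2 * x)) (at x)"
    using DERIV_chain2[OF GR_deriv[OF nu] sq] by simp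
  have dG1: "((\<lambda>x. G1 nu (x^2)) has_real_derivative G2 nu (x^2) * (2 * x)) (at x)"
    using DERIV_chain2[OF G1_deriv[OF nu] sq] by simp
  have dP: "((\<lambda>x. x powr (nu + 1/2)) has_real_derivative (nu + 1/2) * x powr (nu + 1/2 - 1)) (at x)"
    by (rule has_real_derivative_powr[OF x])
  have dQ: "((\<lambda>x. x powr (nu - 1/2)) has_real_derivative (nu - 1/2) * x powr (nu - 1/2 - 1)) (at x)"
    by (rule has_real_derivative_powr[OF x])
  have d2x: "((\<lambda>x. 2 * x) has_real_derivative 2) (at x)"
    by (auto intro!: derivative_eq_intros)
  have t1: "((\<lambda>x. (nu + 1/2) * x powr (nu - 1/2) * GR nu (x^2)) has_real_derivative
      (nu + 1/2) * ((nu - 1/2) * x powr (nu - 1/2 - 1) * GR nu (x^2) + G1 nu (x^2) * (2 * x) * x powr (nu - 1/2))) (at x)"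
    using DERIV_cmult[OF DERIV_mult[OF dQ dG], of "nu + 1/2"] by (simp add: mult.assoc)
  have t2: "((\<lambda>x. x powr (nu + 1/2) * (G1 nu (x^2) * (2 * x))) has_real_derivative
      (nu + 1/2) * x powr (nu + 1/2 - 1) * (G1 nu (x^2) * (2 * x)) +
      (G2 nu (x^2) * (2 * x) * (2 * x) + 2 * G1 nu (x^2)) * x powr (nu + 1/2)) (at x)"
    using DERIV_mult[OF dP DERIV_mult[OF dG1 d2x]] by (simp add: algebra_simps)
  have D: "(up nu has_real_derivative
      (nu + 1/2) * ((nu - 1/2) * x powr (nu - 1/2 - 1) * GR nu (x^2) + G1 nu (x^2) * (2 * x) * x powr (nu - 1/2))
      + ((nu + 1/2) * x powr (nu + 1/2 - 1) * (G1 nu (x^2) * (2 * x)) +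
      (G2 nu (x^2) * (2 * x) * (2 * x) + 2 * G1 nu (x^2)) * x powr (nu + 1/2))) (at x)"
    unfolding up_def[abs_def] by (rule DERIV_add[OF t1 t2])
  define P where "P = x powr (nu + 1/2)"
  have e1: "x powr (nu + 1/2) = x powr (nu - 1/2) * x powr 1"
    by (subst powr_add[symmetric]) (simp add: add.commute)
  have P1: "x powr (nu - 1/2) = P / x"
    unfolding P_def e1 using x by simp
  have e2: "x powr (nu + 1/2) = x powr (nu - 1/2 - 1) * x powr 2"
    by (subst powr_add[symmetric]) (simp add: add.commute)
  have P2: "x powr (nu - 1/2 - 1) = P / x^2"
    unfolding P_def e2 using x by (simp add: powr_numeral)
  have P3: "x powr (nu + 1/2 - 1) = P / x" using P1 by simp
  have ode: "4 * x^2 * G2 nu (x^2) + 4 * (nu + 1) * G1 nu (x^2) + GR nu (x^2) = 0"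
    using G_ode[OF nu, of "x^2"] by simp
  have "(nu + 1/2) * ((nu - 1/2) * x powr (nu - 1/2 - 1) * GR nu (x^2) + G1 nu (x^2) * (2 * x) * x powr (nu - 1/2))
      + ((nu + 1/2) * x powr (nu + 1/2 - 1) * (G1 nu (x^2) * (2 * x)) +
      (G2 nu (x^2) * (2 * x) * (2 * x) + 2 * G1 nu (x^2)) * x powr (nu + 1/2))
      = P * ((nu^2 - 1/4) / x^2 * GR nu (x^2) + (4 * x^2 * G2 nu (x^2) + 4 * (nu + 1) * G1 nu (x^2)))"
    unfolding P1 P2 P3 P_def[symmetric] using x by (simp add: field_simps power2_eq_square)
  also have "\<dots> = - qq nu x * uu nu x"
  proof -
    have ode': "4 * x^2 * G2 nu (x^2) + 4 * (nu + 1) * G1 nu (x^2) = - GR nu (x^2)"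
      using ode by linarith
    show ?thesis unfolding ode' qq_def uu_def P_def[symmetric] by (simp add: algebra_simps)
  qed
  finally show ?thesis using D by simp
qed


lemma GG_real:
  assumes nu: "nu \<ge> 0"
  shows "GG nu (complex_of_real t) = complex_of_real (GR nu t)"
proof -
  have "complex_of_real (GR nu t) = (\<Sum>k. complex_of_real (cc nu k * t ^ k))"
    unfolding GR_def by (rule suminf_of_real[OF summable_GR[OF nu]])
  then show ?thesis unfolding GG_def by simp
qed

lemma GG_holo:
  assumes nu: "nu \<ge> 0"
  shows "(GG nu :: complex \<Rightarrow> complex) holomorphic_on UNIV"
proof -
  have "\<And>z::complex. (GG nu has_field_derivative (\<Sum>n. diffs (\<lambda>k. complex_of_real (cc nu k)) n * z^n)) (at z)"
    unfolding GG_def[abs_def] by (rule termdiffs_strong_converges_everywhere) (rule summable_cc[OF nu])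
  then show ?thesis by (auto simp: holomorphic_on_open)
qed

lemma GR_0: "GR nu 0 = 1 / Gamma (nu + 1)"
  unfolding GR_def using powser_zero[of "cc nu"] by (simp add: cc_0)

lemma finite_GR_zeros:
  assumes nu: "nu \<ge> 0"
  shows "finite {t\<in>{0..T}. GR nu t = 0}"
proof -
  have g: "Gamma (nu + 1) \<noteq> 0" using Gamma_real_pos[of "nu+1"] nu by linarith
  have G0: "GG nu (0::complex) \<noteq> 0"
    using GG_real[OF nu, of 0] GR_0[of nu] nu g by simp
  have fin: "finite {z\<in>cball 0 T. GG nu (z::complex) = 0}"
  proof (cases "GG nu constant_on (UNIV :: complex set)")
    case True
    then obtain c where c: "\<And>z::complex. GG nu z = c" by (auto simp: constant_on_def)
    then have "\<And>z::complex. GG nu z \<noteq> 0" using G0 by metis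
    then show ?thesis by simp
  next
    case False
    show ?thesis
      by (rule holomorphic_compact_finite_zeros[OF GG_holo[OF nu]]) (use False in auto)
  qed
  have "{t\<in>{0..T}. GR nu t = 0} \<subseteq> Re ` {z\<in>cball 0 T. GG nu (z::complex) = 0}"
  proof
    fix t assume t: "t \<in> {t\<in>{0..T}. GR nu t = 0}"
    then have "complex_of_real t \<in> {z\<in>cball 0 T. GG nu (z::complex) = 0}"
      using GG_real[OF nu, of t] by (auto simp: dist_norm)
    then show "t \<in> Re ` {z\<in>cball 0 T. GG nu (z::complex) = 0}"
      by (metis Re_complex_of_real image_eqI)
  qed
  then show ?thesis using fin finite_subset by blast
qed

lemma finite_J_zeros:
  assumes nu: "nu \<ge> 0"
  shows "finite {x. 0 < x \<and> x \<le> X \<and> besselJ nu x = 0}"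
proof -
  have "{x. 0 < x \<and> x \<le> X \<and> besselJ nu x = 0} \<subseteq> sqrt ` {t\<in>{0..X^2}. GR nu t = 0}"
  proof
    fix x assume x: "x \<in> {x. 0 < x \<and> x \<le> X \<and> besselJ nu x = 0}"
    then have "GR nu (x^2) = 0" using besselJ_eq[OF nu, of x] by simp
    moreover have "x^2 \<le> X^2" using x by (auto intro!: power_mono)
    ultimately have "x^2 \<in> {t\<in>{0..X^2}. GR nu t = 0}" by simp
    moreover have "x = sqrt (x^2)" using x by simp
    ultimately show "x \<in> sqrt ` {t\<in>{0..X^2}. GR nu t = 0}" by blast
  qed
  then show ?thesis using finite_GR_zeros[OF nu] finite_subset by blast
qed


lemma W_deriv:
  fixes u u' Q :: "real \<Rightarrow> real"
  assumes du: "(u has_real_derivative u' x) (at x)"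
    and dup: "(u' has_real_derivative (- Q x * u x)) (at x)"
  shows "((\<lambda>x. u' x * sin (w * (x - a)) - u x * (w * cos (w * (x - a)))) has_real_derivative
           (w^2 - Q x) * u x * sin (w * (x - a))) (at x)"
proof -
  have ds: "((\<lambda>x. sin (w * (x - a))) has_real_derivative w * cos (w * (x - a))) (at x)"
    by (auto intro!: derivative_eq_intros)
  have dc: "((\<lambda>x. w * cos (w * (x - a))) has_real_derivative - (w^2) * sin (w * (x - a))) (at x)"
    by (auto intro!: derivative_eq_intros simp: power2_eq_square)
  show ?thesis
    using DERIV_diff[OF DERIV_mult[OF dup ds] DERIV_mult[OF du dc]]
    by (simp add: algebra_simps power2_eq_square)
qed

lemma cont_from_deriv:
  fixes u u' :: "real \<Rightarrow> real"
  assumes "\<forall>x\<in>{a..b}. (u has_real_derivative u' x) (at x)"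
  shows "continuous_on {a..b} u"
  using assms by (meson DERIV_isCont continuous_at_imp_continuous_on)

lemma sturm_exists_pos:
  fixes u u' Q :: "real \<Rightarrow> real"
  assumes w: "w > 0" and b: "b = a + pi / w"
    and Q: "\<forall>x\<in>{a..b}. Q x \<ge> w^2"
    and du: "\<forall>x\<in>{a..b}. (u has_real_derivative u' x) (at x)"
    and dup: "\<forall>x\<in>{a..b}. (u' has_real_derivative (- Q x * u x)) (at x)"
    and nz: "\<forall>x\<in>{a<..b}. u x \<noteq> 0"
    and ub: "u b > 0"
  shows False
proof -
  have ab: "a < b" using b w by simp
  have cont: "continuous_on {a..b} u" by (rule cont_from_deriv[OF du])
  have pos: "u x > 0" if x: "x \<in> {a<..b}" for x
  proof (rule ccontr)
    assume "\<not> u x > 0"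
    then have "u x \<le> 0" by simp
    moreover have "continuous_on {x..b} u" using x by (auto intro: continuous_on_subset[OF cont])
    ultimately obtain y where "x \<le> y" "y \<le> b" "u y = 0"
      using IVT'[of u x 0 b] ub x by auto
    then show False using nz x by auto
  qed
  have ua: "u a \<ge> 0"
  proof (rule ccontr)
    assume "\<not> u a \<ge> 0"
    then obtain y where y: "a \<le> y" "y \<le> b" "u y = 0"
      using IVT'[of u a 0 b] ub ab cont by auto
    then have "y \<noteq> a" using \<open>\<not> u a \<ge> 0\<close> by auto
    then show False using nz y by auto
  qed
  define W where "W = (\<lambda>x. u' x * sin (w * (x - a)) - u x * (w * cos (w * (x - a))))"
  have dW: "(W has_real_derivative (w^2 - Q x) * u x * sin (w * (x - a))) (at x)"
    if "a \<le> x" "x \<le> b" for x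
    unfolding W_def by (rule W_deriv) (use du dup that in auto)
  obtain z where z: "a < z" "z < b" "W b - W a = (b - a) * ((w^2 - Q z) * u z * sin (w * (z - a)))"
    using MVT2[OF ab, of W "\<lambda>x. (w^2 - Q x) * u x * sin (w * (x - a))"] dW by blast
  have "sin (w * (z - a)) > 0"
  proof (rule sin_gt_zero)
    show "0 < w * (z - a)" using z w by simp
    have "w * (z - a) < w * (b - a)" using z w by simp
    also have "\<dots> = pi" using b w by simp
    finally show "w * (z - a) < pi" .
  qed
  moreover have "u z > 0" using pos z by auto
  moreover have "w^2 - Q z \<le> 0" using Q z by auto
  ultimately have "(w^2 - Q z) * u z * sin (w * (z - a)) \<le> 0"
    by (simp add: mult_nonpos_nonneg)
  then have "W b - W a \<le> 0" using z ab by (simp add: mult_nonneg_nonpos)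
  moreover have "W b = w * u b" unfolding W_def using b w by simp
  moreover have "W a = - w * u a" unfolding W_def by simp
  moreover have "w * u b > 0" using ub w by simp
  moreover have "w * u a \<ge> 0" using ua w by simp
  ultimately show False by linarith
qed

lemma sturm_exists:
  fixes u u' Q :: "real \<Rightarrow> real"
  assumes w: "w > 0" and b: "b = a + pi / w"
    and Q: "\<forall>x\<in>{a..b}. Q x \<ge> w^2"
    and du: "\<forall>x\<in>{a..b}. (u has_real_derivative u' x) (at x)"
    and dup: "\<forall>x\<in>{a..b}. (u' has_real_derivative (- Q x * u x)) (at x)"
  shows "\<exists>x\<in>{a<..b}. u x = 0"
proof (rule ccontr)
  assume nz: "\<not> (\<exists>x\<in>{a<..b}. u x = 0)"
  have "b \<in> {a<..b}" using b w by simp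
  then have "u b \<noteq> 0" using nz by blast
  then show False
  proof (cases "u b > 0")
    case True
    show False by (rule sturm_exists_pos[OF w b Q du dup _ True]) (use nz in auto)
  next
    case False
    with \<open>u b \<noteq> 0\<close> have neg: "(\<lambda>x. - u x) b > 0" by simp
    have d1: "\<forall>x\<in>{a..b}. ((\<lambda>x. - u x) has_real_derivative - u' x) (at x)"
      using du by (auto intro: DERIV_minus)
    have d2: "\<forall>x\<in>{a..b}. ((\<lambda>x. - u' x) has_real_derivative - Q x * - u x) (at x)"
      proof
        fix x assume "x \<in> {a..b}"
        from DERIV_minus[OF dup[rule_format, OF this]] show "((\<lambda>x. - u' x) has_real_derivative - Q x * - u x) (at x)" by simp
      qed
    have d3: "\<forall>x\<in>{a<..b}. - u x \<noteq> 0" using nz by auto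
    show False
      by (rule sturm_exists_pos[where u="\<lambda>x. - u x" and u'="\<lambda>x. - u' x", OF w b Q d1 d2 d3 neg])
  qed
qed

lemma sturm_spacing_pos:
  fixes u u' Q :: "real \<Rightarrow> real"
  assumes w: "w > 0" and ab: "a < b" and short: "b - a < pi / w"
    and ua: "u a = 0" and ub: "u b = 0"
    and Q: "\<forall>x\<in>{a..b}. Q x < w^2"
    and du: "\<forall>x\<in>{a..b}. (u has_real_derivative u' x) (at x)"
    and dup: "\<forall>x\<in>{a..b}. (u' has_real_derivative (- Q x * u x)) (at x)"
    and pos: "\<forall>x\<in>{a<..<b}. u x > 0"
  shows False
proof -
  define W where "W = (\<lambda>x. u' x * sin (w * (x - a)) - u x * (w * cos (w * (x - a))))"
  have dW: "(W has_real_derivative (w^2 - Q x) * u x * sin (w * (x - a))) (at x)"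
    if "a \<le> x" "x \<le> b" for x
    unfolding W_def by (rule W_deriv) (use du dup that in auto)
  obtain z where z: "a < z" "z < b" "W b - W a = (b - a) * ((w^2 - Q z) * u z * sin (w * (z - a)))"
    using MVT2[OF ab, of W "\<lambda>x. (w^2 - Q x) * u x * sin (w * (x - a))"] dW by blast
  have wba: "w * (b - a) < pi" using short w by (simp add: field_simps)
  have "sin (w * (z - a)) > 0"
  proof (rule sin_gt_zero)
    show "0 < w * (z - a)" using z w by simp
    have "w * (z - a) < w * (b - a)" using z w by simp
    then show "w * (z - a) < pi" using wba by simp
  qed
  moreover have "u z > 0" using pos z by auto
  moreover have "w^2 - Q z > 0" using Q z by auto
  ultimately have "(w^2 - Q z) * u z * sin (w * (z - a)) > 0" by simp
  then have "W b - W a > 0" using z ab by simp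
  moreover have "W a = 0" unfolding W_def using ua by simp
  moreover have sb: "sin (w * (b - a)) > 0" using wba w ab by (intro sin_gt_zero) auto
  moreover have "W b = u' b * sin (w * (b - a))" unfolding W_def using ub by simp
  ultimately have "u' b * sin (w * (b - a)) > 0" by simp
  then have "u' b > 0" using sb by (simp add: zero_less_mult_iff)
  then obtain d where d: "d > 0" "\<forall>h>0. h < d \<longrightarrow> u (b - h) < u b"
    using DERIV_pos_inc_left[of u "u' b" b] du ab by auto
  define h where "h = min d (b - a) / 2"
  have h: "h > 0" "h < d" "h < b - a" using d ab by (auto simp: h_def)
  then have "u (b - h) < 0" using d ub by auto
  moreover have "b - h \<in> {a<..<b}" using h by auto
  ultimately show False using pos by force
qed

lemma sturm_spacing:
  fixes u u' Q :: "real \<Rightarrow> real"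
  assumes w: "w > 0" and ab: "a < b"
    and ua: "u a = 0" and ub: "u b = 0"
    and Q: "\<forall>x\<in>{a..b}. Q x < w^2"
    and du: "\<forall>x\<in>{a..b}. (u has_real_derivative u' x) (at x)"
    and dup: "\<forall>x\<in>{a..b}. (u' has_real_derivative (- Q x * u x)) (at x)"
    and nz: "\<forall>x\<in>{a<..<b}. u x \<noteq> 0"
  shows "b - a \<ge> pi / w"
proof (rule ccontr)
  assume "\<not> b - a \<ge> pi / w"
  then have short: "b - a < pi / w" by simp
  have cont: "continuous_on {a..b} u" by (rule cont_from_deriv[OF du])
  define m where "m = (a + b) / 2"
  have m: "m \<in> {a<..<b}" using ab by (auto simp: m_def)
  have samesign: "u x > 0" if "u m > 0" "x \<in> {a<..<b}" for x
  proof (rule ccontr)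
    assume "\<not> u x > 0"
    then have "u x < 0" using nz that by force
    have "\<exists>y. min x m \<le> y \<and> y \<le> max x m \<and> u y = 0"
    proof (cases "x \<le> m")
      case True
      then show ?thesis using IVT'[of u x 0 m] \<open>u x < 0\<close> \<open>u m > 0\<close> that
        continuous_on_subset[OF cont, of "{x..m}"] m by auto
    next
      case False
      then show ?thesis using IVT2'[of u x 0 m] \<open>u x < 0\<close> \<open>u m > 0\<close> that
        continuous_on_subset[OF cont, of "{m..x}"] m by auto
    qed
    then obtain y where "min x m \<le> y" "y \<le> max x m" "u y = 0" by blast
    moreover have "a < min x m" "max x m < b" using m that by auto
    ultimately show False using nz by force
  qed
  have "u m \<noteq> 0" using nz m by blast
  show False
  proof (cases "u m > 0")
    case True
    show False by (rule sturm_spacing_pos[OF w ab short ua ub Q du dup]) (use samesign True in auto)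
  next
    case False
    then have "u m < 0" using \<open>u m \<noteq> 0\<close> by simp
    have samesign': "u x < 0" if "x \<in> {a<..<b}" for x
    proof (rule ccontr)
      assume "\<not> u x < 0"
      then have "u x > 0" using nz that by force
      have "\<exists>y. min x m \<le> y \<and> y \<le> max x m \<and> u y = 0"
      proof (cases "x \<le> m")
        case True
        then show ?thesis using IVT2'[of u m 0 x] \<open>u x > 0\<close> \<open>u m < 0\<close> that
          continuous_on_subset[OF cont, of "{x..m}"] m by auto
      next
        case False
        then show ?thesis using IVT'[of u m 0 x] \<open>u x > 0\<close> \<open>u m < 0\<close> that
          continuous_on_subset[OF cont, of "{m..x}"] m by auto
      qed
      then obtain y where "min x m \<le> y" "y \<le> max x m" "u y = 0" by blast
      moreover have "a < min x m" "max x m < b" using m that by auto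
      ultimately show False using nz by force
    qed
    have d1: "\<forall>x\<in>{a..b}. ((\<lambda>x. - u x) has_real_derivative - u' x) (at x)"
      using du by (auto intro: DERIV_minus)
    have d2: "\<forall>x\<in>{a..b}. ((\<lambda>x. - u' x) has_real_derivative - Q x * - u x) (at x)"
      proof
        fix x assume "x \<in> {a..b}"
        from DERIV_minus[OF dup[rule_format, OF this]] show "((\<lambda>x. - u' x) has_real_derivative - Q x * - u x) (at x)" by simp
      qed
    have d3: "\<forall>x\<in>{a<..<b}. - u x > 0" using samesign' by auto
    have ua': "- u a = 0" and ub': "- u b = 0" using ua ub by auto
    show False
      by (rule sturm_spacing_pos[where u="\<lambda>x. - u x" and u'="\<lambda>x. - u' x", OF w ab short ua' ub' Q d1 d2 d3])
  qed
qed


lemma rank_props: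
  fixes S :: "'a set" and lt :: "'a \<Rightarrow> 'a \<Rightarrow> bool"
  assumes irr: "\<forall>x\<in>S. \<not> lt x x"
    and tr: "\<forall>x\<in>S. \<forall>y\<in>S. \<forall>z\<in>S. lt x y \<longrightarrow> lt y z \<longrightarrow> lt x z"
    and tot: "\<forall>x\<in>S. \<forall>y\<in>S. x \<noteq> y \<longrightarrow> lt x y \<or> lt y x"
    and fin: "\<forall>x\<in>S. finite {y\<in>S. lt y x}"
    and inf: "infinite S"
  shows "bij_betw (\<lambda>x. card {y\<in>S. lt y x}) S UNIV"
    and "\<forall>x\<in>S. \<forall>y\<in>S. lt x y \<longrightarrow> card {z\<in>S. lt z x} < card {z\<in>S. lt z y}"
proof -
  define rk where "rk = (\<lambda>x. card {y\<in>S. lt y x})"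
  have mono: "rk x < rk y" if "x \<in> S" "y \<in> S" "lt x y" for x y
  proof -
    have "{z\<in>S. lt z x} \<subset> {z\<in>S. lt z y}"
    proof
      show "{z\<in>S. lt z x} \<subseteq> {z\<in>S. lt z y}" using tr that by blast
      show "{z\<in>S. lt z x} \<noteq> {z\<in>S. lt z y}" using that irr by blast
    qed
    then show ?thesis unfolding rk_def using fin that by (intro psubset_card_mono) auto
  qed
  have inj: "inj_on rk S"
  proof (rule inj_onI)
    fix x y assume "x \<in> S" "y \<in> S" "rk x = rk y"
    then show "x = y" using tot mono by (metis less_irrefl)
  qed
  have pred: "rk ` {y\<in>S. lt y x} = {..<rk x}" if x: "x \<in> S" for x
  proof -
    have sub: "rk ` {y\<in>S. lt y x} \<subseteq> {..<rk x}" using mono x by auto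
    have "card (rk ` {y\<in>S. lt y x}) = card {y\<in>S. lt y x}"
      by (rule card_image) (rule inj_on_subset[OF inj], auto)
    also have "\<dots> = card {..<rk x}" by (simp add: rk_def)
    finally show ?thesis using sub by (intro card_subset_eq) auto
  qed
  have surj: "rk ` S = UNIV"
  proof -
    have "infinite (rk ` S)" using inj inf finite_image_iff by blast
    show ?thesis
    proof (intro equalityI subsetI)
      fix n :: nat
      obtain m where "m \<in> rk ` S" "n < m"
        using \<open>infinite (rk ` S)\<close> by (meson infinite_nat_iff_unbounded)
      then obtain x where x: "x \<in> S" "rk x = m" by blast
      then have "n \<in> rk ` {y\<in>S. lt y x}" using pred[OF x(1)] \<open>n < m\<close> by auto
      then show "n \<in> rk ` S" by auto
    qed simp
  qed
  show "bij_betw (\<lambda>x. card {y\<in>S. lt y x}) S UNIV"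
    using inj surj unfolding rk_def bij_betw_def by simp
  show "\<forall>x\<in>S. \<forall>y\<in>S. lt x y \<longrightarrow> card {z\<in>S. lt z x} < card {z\<in>S. lt z y}"
    using mono unfolding rk_def by blast
qed


lemma qq_bounds:
  assumes y: "0 < y" "y \<le> x"
  shows "1 - \<bar>nu^2 - 1/4\<bar> / y^2 \<le> qq nu x" "qq nu x \<le> 1 + \<bar>nu^2 - 1/4\<bar> / y^2"
proof -
  have xy: "y^2 \<le> x^2" using y by (intro power_mono) auto
  have "\<bar>nu^2 - 1/4\<bar> / x^2 \<le> \<bar>nu^2 - 1/4\<bar> / y^2"
    using y xy by (intro divide_left_mono) auto
  moreover have "\<bar>(nu^2 - 1/4) / x^2\<bar> = \<bar>nu^2 - 1/4\<bar> / x^2" by (simp add: abs_divide)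
  ultimately have "\<bar>(nu^2 - 1/4) / x^2\<bar> \<le> \<bar>nu^2 - 1/4\<bar> / y^2" by simp
  then have "- (\<bar>nu^2 - 1/4\<bar> / y^2) \<le> (nu^2 - 1/4) / x^2 \<and> (nu^2 - 1/4) / x^2 \<le> \<bar>nu^2 - 1/4\<bar> / y^2"
    using abs_ge_self[of "(nu^2 - 1/4) / x^2"] abs_ge_minus_self[of "(nu^2 - 1/4) / x^2"] by linarith
  then show "1 - \<bar>nu^2 - 1/4\<bar> / y^2 \<le> qq nu x" "qq nu x \<le> 1 + \<bar>nu^2 - 1/4\<bar> / y^2"
    unfolding qq_def by linarith+
qed

context
  fixes nu :: real
  assumes nu: "nu \<ge> 0"
begin

lemma du_on: "0 < a \<Longrightarrow> \<forall>x\<in>{a..b}. (uu nu has_real_derivative up nu x) (at x)"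
  using uu_deriv[OF nu] by auto

lemma dup_on: "0 < a \<Longrightarrow> \<forall>x\<in>{a..b}. (up nu has_real_derivative (- qq nu x * uu nu x)) (at x)"
  using up_deriv[OF nu] by auto

lemma Z_unbounded: "\<exists>z. z > X \<and> 0 < z \<and> besselJ nu z = 0"
proof -
  define c where "c = \<bar>nu^2 - 1/4\<bar>"
  define a where "a = max X 0 + 1 + c"
  have c0: "c \<ge> 0" by (simp add: c_def)
  have a1: "a \<ge> 1 + c" "a > 0" "a > X" using c0 by (auto simp: a_def)
  have "(1 + c)^2 \<le> a^2" using a1 c0 by (intro power_mono) auto
  then have h: "1 + 2*c + c*c \<le> a*a" by (simp add: power2_eq_square algebra_simps)
  have "c * c \<ge> 0" by simp
  then have "4*c \<le> 3*(a*a)" using h c0 by linarith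
  then have ca: "c \<le> 3/4 * a^2" by (simp add: power2_eq_square)
  have Q: "\<forall>x\<in>{a..a + pi / (1/2)}. qq nu x \<ge> (1/2)^2"
  proof
    fix x assume x: "x \<in> {a..a + pi / (1/2)}"
    have "1 - c / a^2 \<le> qq nu x" using qq_bounds(1)[of a x nu] x a1 by (simp add: c_def)
    moreover have "c / a^2 \<le> 3/4" using ca a1 by (simp add: divide_simps)
    ultimately show "qq nu x \<ge> (1/2)^2" by (simp add: power2_eq_square)
  qed
  obtain z where z: "z \<in> {a<..a + pi / (1/2)}" "uu nu z = 0"
    using sturm_exists[of "1/2" "a + pi / (1/2)" a "qq nu" "uu nu" "up nu", OF _ refl Q du_on[OF a1(2)] dup_on[OF a1(2)]]
    by auto
  then have "z > X" "z > 0" using a1 by auto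
  moreover have "besselJ nu z = 0" using z uu_zero_iff[OF nu \<open>z > 0\<close>] by simp
  ultimately show ?thesis by blast
qed

definition Zs :: "real set" where "Zs = {x. 0 < x \<and> besselJ nu x = 0}"
definition rk :: "real \<Rightarrow> nat" where "rk x = card {y\<in>Zs. y < x}"

lemma Zs_iff: "x \<in> Zs \<longleftrightarrow> 0 < x \<and> besselJ nu x = 0" by (simp add: Zs_def)

lemma Zs_infinite: "infinite Zs"
proof
  assume fin: "finite Zs"
  obtain z where "z > Max (insert 0 Zs)" "0 < z" "besselJ nu z = 0" using Z_unbounded by blast
  moreover have "z \<in> insert 0 Zs" using calculation by (simp add: Zs_def)
  ultimately show False using fin by (meson Max_ge finite_insert not_le)
qed

lemma Zs_fin: "finite {y\<in>Zs. y < x}"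
proof -
  have "{y\<in>Zs. y < x} \<subseteq> {y. 0 < y \<and> y \<le> x \<and> besselJ nu y = 0}" by (auto simp: Zs_def)
  then show ?thesis using finite_J_zeros[OF nu, of x] finite_subset by blast
qed

lemma rk_both: "bij_betw rk Zs UNIV \<and> (\<forall>x\<in>Zs. \<forall>y\<in>Zs. x < y \<longrightarrow> rk x < rk y)"
proof -
  have i: "\<forall>x\<in>Zs. \<not> x < (x::real)" by simp
  have t: "\<forall>x\<in>Zs. \<forall>y\<in>Zs. \<forall>z\<in>Zs. x < y \<longrightarrow> y < z \<longrightarrow> x < (z::real)" by auto
  have o: "\<forall>x\<in>Zs. \<forall>y\<in>Zs. x \<noteq> y \<longrightarrow> x < y \<or> y < (x::real)" by auto
  have f: "\<forall>x\<in>Zs. finite {y\<in>Zs. y < x}" using Zs_fin by blast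
  show ?thesis using rank_props[of Zs "(<)", OF i t o f Zs_infinite] unfolding rk_def by blast
qed

lemma rk_bij: "bij_betw rk Zs UNIV" using rk_both by blast
lemma rk_mono: "\<forall>x\<in>Zs. \<forall>y\<in>Zs. x < y \<longrightarrow> rk x < rk y" using rk_both by blast

lemma bz_char: "bessel_zero nu n \<in> Zs \<and> rk (bessel_zero nu n) = n - 1"
proof -
  have eq: "{y. 0 < y \<and> y < x \<and> besselJ nu y = 0} = {y\<in>Zs. y < x}" for x
    by (auto simp: Zs_def)
  have ex: "\<exists>!x. x \<in> Zs \<and> rk x = n - 1"
  proof -
    obtain x where "x \<in> Zs" "rk x = n - 1" using rk_bij by (metis UNIV_I bij_betw_def imageE)
    moreover have "\<And>y. y \<in> Zs \<Longrightarrow> rk y = n - 1 \<Longrightarrow> y = x"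
      using rk_bij calculation by (metis bij_betw_def inj_onD)
    ultimately show ?thesis by blast
  qed
  have "bessel_zero nu n = (THE x. x \<in> Zs \<and> rk x = n - 1)"
    unfolding bessel_zero_def rk_def eq by (simp add: Zs_def conj_assoc)
  then show ?thesis using theI'[OF ex] by simp
qed

abbreviation "jz n \<equiv> bessel_zero nu n"

lemma jz_pos: "jz n > 0" and jz_zero: "besselJ nu (jz n) = 0"
  using bz_char[of n] by (auto simp: Zs_def)

lemma jz_mono: assumes "1 \<le> n" "n < m" shows "jz n < jz m"
proof (rule ccontr)
  assume "\<not> jz n < jz m"
  then have "jz m \<le> jz n" by simp
  then have "rk (jz m) \<le> rk (jz n)"
    using rk_mono bz_char[of n] bz_char[of m] by (metis less_imp_le order.order_iff_strict)
  then show False using bz_char[of n] bz_char[of m] assms by simp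
qed

lemma jz_mono_le: assumes "1 \<le> n" "n \<le> m" shows "jz n \<le> jz m"
  using jz_mono[of n m] assms by (cases "n = m") auto

lemma zero_is_jz: assumes "z \<in> Zs" shows "z = jz (rk z + 1)"
proof -
  have "rk (jz (rk z + 1)) = rk z" using bz_char[of "rk z + 1"] by simp
  then show ?thesis using rk_bij assms bz_char[of "rk z + 1"] by (metis bij_betw_def inj_onD)
qed

lemma no_zero_between:
  assumes "1 \<le> n" "z \<in> Zs" "jz n < z" shows "jz (n + 1) \<le> z"
proof -
  define k where "k = rk z + 1"
  have zk: "z = jz k" using zero_is_jz[OF assms(2)] by (simp add: k_def)
  have "n < k"
  proof (rule ccontr)
    assume "\<not> n < k"
    then have "jz k \<le> jz n" using jz_mono_le[of k n] by (simp add: k_def)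
    then show False using assms zk by simp
  qed
  then show ?thesis using jz_mono_le[of "n+1" k] zk by simp
qed

lemma uu_nz_between:
  assumes "1 \<le> n" "x \<in> {jz n<..<jz (n+1)}" shows "uu nu x \<noteq> 0"
proof
  assume "uu nu x = 0"
  moreover have "x > 0" using assms jz_pos[of n] by auto
  ultimately have "x \<in> Zs" using uu_zero_iff[OF nu] by (simp add: Zs_def)
  then show False using no_zero_between[OF assms(1)] assms by force
qed

lemma uu_jz: "uu nu (jz n) = 0"
  using uu_zero_iff[OF nu jz_pos] jz_zero by simp

end

lemma step_ineq:
  fixes J s E :: real
  assumes J: "J \<ge> 4 * pi" and E: "E > 0" and e: "E / J^2 \<le> 1/8"
    and lo: "pi * (1 - E / J^2) \<le> s" and hi: "s \<le> pi * (1 + 2 * E / J^2)"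
  shows "s - pi + 6 * E / (J + s) \<le> 6 * E / J"
    and "s - pi - 6 * E / (J + s) \<ge> - (6 * E / J)"
proof -
  have J0: "J > 0" using J pi_gt_zero by linarith
  have "pi * (1 - 1/8) \<le> pi * (1 - E / J^2)" using e by (intro mult_left_mono) auto
  moreover have "pi * (1 - 1/8) = 7/8 * pi" by simp
  ultimately have s1: "s \<ge> pi / 2" using lo pi_gt_zero by linarith
  have s2: "s \<le> J / 2"
  proof -
    have "2 * E / J^2 = 2 * (E / J^2)" by simp
    then have e2: "2 * E / J^2 \<le> 2 * (1/8)" using e by linarith
    have "pi * (1 + 2 * E / J^2) \<le> pi * (1 + 2 * (1/8))" using e2 by (intro mult_left_mono) auto
    moreover have "pi * (1 + 2 * (1/8)) = 5/4 * pi" by simp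
    ultimately show ?thesis using hi J pi_gt_zero by linarith
  qed
  have s0: "s > 0" using s1 pi_gt_zero by linarith
  have Js: "J + s > 0" using J0 s0 by simp
  have eq: "6 * E / J - 6 * E / (J + s) = 6 * E * s / (J * (J + s))"
    using J0 Js by (simp add: field_simps)
  have ineq: "2 * pi * (J + s) \<le> 6 * s * J"
  proof -
    have "2 * pi * (J + s) \<le> 2 * pi * (3/2 * J)" using s2 pi_gt_zero by (intro mult_left_mono) auto
    also have "\<dots> = 6 * (pi/2) * J" by simp
    also have "\<dots> \<le> 6 * s * J" using s1 J0 by (intro mult_right_mono) auto
    finally show ?thesis .
  qed
  have key: "2 * pi * E / J^2 \<le> 6 * E * s / (J * (J + s))"
  proof -
    have "E * (2 * pi * (J + s)) / (J^2 * (J + s)) = (E * (2 * pi)) * (J + s) / (J^2 * (J + s))"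
      by (simp add: mult.assoc)
    also have "\<dots> = E * (2 * pi) / J^2" using Js by (intro nonzero_mult_divide_mult_cancel_right) simp
    finally have "2 * pi * E / J^2 = E * (2 * pi * (J + s)) / (J^2 * (J + s))" by (simp add: mult_ac)
    also have "\<dots> \<le> E * (6 * s * J) / (J^2 * (J + s))"
      using ineq E J0 Js by (intro divide_right_mono mult_left_mono) auto
    also have "\<dots> = (6 * E * s) * J / ((J * (J + s)) * J)"
      by (simp add: mult_ac power2_eq_square)
    also have "\<dots> = 6 * E * s / (J * (J + s))"
      using J0 by (intro nonzero_mult_divide_mult_cancel_right) simp
    finally show ?thesis .
  qed
  have a: "s - pi \<le> 2 * pi * E / J^2" using hi by (simp add: algebra_simps)
  have b: "s - pi \<ge> - (2 * pi * E / J^2)"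
  proof -
    have "s - pi \<ge> - (pi * E / J^2)" using lo by (simp add: algebra_simps)
    moreover have "pi * E / J^2 \<le> 2 * pi * E / J^2" using E J0 pi_gt_zero by (simp add: divide_right_mono)
    ultimately show ?thesis by linarith
  qed
  show "s - pi + 6 * E / (J + s) \<le> 6 * E / J" using a key eq by linarith
  show "s - pi - 6 * E / (J + s) \<ge> - (6 * E / J)" using b key eq by linarith
qed

context
  fixes nu :: real
  assumes nu: "nu \<ge> 0"
begin

lemma jz_spacing: "\<exists>\<sigma>>0. \<forall>n\<ge>1. bessel_zero nu (n+1) - bessel_zero nu n \<ge> \<sigma>"
proof -
  define c where "c = \<bar>nu^2 - 1/4\<bar>"
  define j1 where "j1 = bessel_zero nu 1"
  define w where "w = 2 + c / j1^2"
  have j1: "j1 > 0" using jz_pos[OF nu] by (simp add: j1_def)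
  have c0: "c \<ge> 0" by (simp add: c_def)
  have w2: "w \<ge> 2" using c0 j1 by (simp add: w_def)
  have "w \<le> w^2" using w2 by (simp add: power2_eq_square)
  have "\<forall>n\<ge>1. bessel_zero nu (n+1) - bessel_zero nu n \<ge> pi / w"
  proof (intro allI impI)
    fix n :: nat assume n: "1 \<le> n"
    define a where "a = bessel_zero nu n"
    define b where "b = bessel_zero nu (n+1)"
    have ab: "a < b" using jz_mono[OF nu n, of "n+1"] by (simp add: a_def b_def)
    have a0: "a > 0" using jz_pos[OF nu] by (simp add: a_def)
    have aj: "j1 \<le> a" using jz_mono_le[OF nu, of 1 n] n by (simp add: a_def j1_def)
    have Q: "\<forall>x\<in>{a..b}. qq nu x < w^2"
    proof
      fix x assume x: "x \<in> {a..b}"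
      have "qq nu x \<le> 1 + c / j1^2" using qq_bounds(2)[of j1 x nu] x aj j1 by (simp add: c_def)
      also have "\<dots> < w" by (simp add: w_def)
      finally show "qq nu x < w^2" using \<open>w \<le> w^2\<close> by simp
    qed
    have "b - a \<ge> pi / w"
      by (rule sturm_spacing[OF _ ab _ _ Q du_on[OF nu a0] dup_on[OF nu a0]])
         (use w2 uu_jz[OF nu] uu_nz_between[OF nu n] in \<open>auto simp: a_def b_def\<close>)
    then show "bessel_zero nu (n+1) - bessel_zero nu n \<ge> pi / w" by (simp add: a_def b_def)
  qed
  moreover have "pi / w > 0" using w2 by simp
  ultimately show ?thesis by blast
qed

lemma jz_step:
  fixes n :: nat
  defines "E \<equiv> \<bar>nu^2 - 1/4\<bar> + 1"
  assumes n: "1 \<le> n" and big: "bessel_zero nu n \<ge> 4 * pi + 2 * E"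
  shows "pi * (1 - E / (bessel_zero nu n)^2) \<le> bessel_zero nu (n+1) - bessel_zero nu n"
    and "bessel_zero nu (n+1) - bessel_zero nu n \<le> pi * (1 + 2 * E / (bessel_zero nu n)^2)"
    and "E / (bessel_zero nu n)^2 \<le> 1/8"
proof -
  define J where "J = bessel_zero nu n"
  define b where "b = bessel_zero nu (n+1)"
  define c where "c = \<bar>nu^2 - 1/4\<bar>"
  define e where "e = E / J^2"
  have c0: "c \<ge> 0" by (simp add: c_def)
  have E1: "E \<ge> 1" "E = c + 1" by (simp_all add: E_def c_def)
  have J0: "J > 0" using jz_pos[OF nu] by (simp add: J_def)
  have J4: "J \<ge> 4" using big pi_gt3 E1 unfolding J_def by linarith
  have J2E: "J \<ge> 2 * E" using big pi_gt_zero unfolding J_def by linarith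
  have "8 * E \<le> J * J"
  proof -
    have "8 * E = 4 * (2 * E)" by simp
    also have "\<dots> \<le> J * J" using J4 J2E E1 by (intro mult_mono) auto
    finally show ?thesis .
  qed
  then have e8: "e \<le> 1/8" using J0 by (simp add: e_def power2_eq_square divide_simps)
  have e0: "e > 0" using E1 J0 by (simp add: e_def)
  then show "E / (bessel_zero nu n)^2 \<le> 1/8" using e8 by (simp add: e_def J_def)
  have ce: "c / J^2 < e" using E1 J0 by (simp add: e_def divide_strict_right_mono)
  have Jb: "J < b" using jz_mono[OF nu n, of "n+1"] by (simp add: J_def b_def)
  define w where "w = 1 - e"
  have w: "w > 0" "w \<le> 1" using e8 e0 by (auto simp: w_def)
  have Qu: "\<forall>x\<in>{J..J + pi / w}. qq nu x \<ge> w^2"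
  proof
    fix x assume x: "x \<in> {J..J + pi / w}"
    have "1 - c / J^2 \<le> qq nu x" using qq_bounds(1)[of J x nu] x J0 by (simp add: c_def)
    moreover have "w^2 \<le> w" using w by (simp add: power2_eq_square mult_le_cancel_left1)
    ultimately show "qq nu x \<ge> w^2" using ce by (simp add: w_def)
  qed
  obtain z where z: "z \<in> {J<..J + pi / w}" "uu nu z = 0"
    using sturm_exists[OF w(1) refl Qu du_on[OF nu J0] dup_on[OF nu J0]] by blast
  have "z \<in> Zs nu" using z J0 uu_zero_iff[OF nu, of z] by (simp add: Zs_iff[OF nu])
  then have "b \<le> z" using no_zero_between[OF nu n, of z] z by (simp add: J_def b_def)
  then have bu: "b - J \<le> pi / w" using z by simp
  have "pi / w \<le> pi * (1 + 2 * e)"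
  proof -
    have "1 \<le> (1 + 2 * e) * w" using e8 e0 by (simp add: w_def algebra_simps power2_eq_square)
    then show ?thesis using w pi_gt_zero by (simp add: divide_simps mult.commute mult.left_commute)
  qed
  with bu have up: "b - J \<le> pi * (1 + 2 * e)" by linarith
  define w' where "w' = 1 + e"
  have w': "w' > 0" using e0 by (simp add: w'_def)
  have Ql: "\<forall>x\<in>{J..b}. qq nu x < w'^2"
  proof
    fix x assume x: "x \<in> {J..b}"
    have "qq nu x \<le> 1 + c / J^2" using qq_bounds(2)[of J x nu] x J0 by (simp add: c_def)
    also have "\<dots> < 1 + e" using ce by simp
    also have "\<dots> \<le> w'^2" using e0 by (simp add: w'_def power2_eq_square algebra_simps)
    finally show "qq nu x < w'^2" .
  qed
  have "b - J \<ge> pi / w'"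
    by (rule sturm_spacing[OF w' Jb _ _ Ql du_on[OF nu J0] dup_on[OF nu J0]])
       (use uu_jz[OF nu] uu_nz_between[OF nu n] in \<open>auto simp: J_def b_def\<close>)
  moreover have "pi * (1 - e) \<le> pi / w'"
  proof -
    have "(1 - e) * w' \<le> 1" by (simp add: w'_def algebra_simps power2_eq_square)
    then show ?thesis using w' pi_gt_zero by (simp add: divide_simps mult.commute mult.left_commute)
  qed
  ultimately have lo: "pi * (1 - e) \<le> b - J" by linarith
  show "pi * (1 - E / (bessel_zero nu n)^2) \<le> bessel_zero nu (n+1) - bessel_zero nu n"
    using lo by (simp add: e_def J_def b_def)
  show "bessel_zero nu (n+1) - bessel_zero nu n \<le> pi * (1 + 2 * E / (bessel_zero nu n)^2)"
    using up by (simp add: e_def J_def b_def)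
qed

lemma jz_asymp: "\<exists>C. \<forall>n\<ge>1. \<bar>bessel_zero nu n - pi * real n\<bar> \<le> C"
proof -
  define E where "E = \<bar>nu^2 - 1/4\<bar> + 1"
  define T where "T = 4 * pi + 2 * E"
  have E0: "E > 0" by (simp add: E_def add_nonneg_pos)
  obtain z where z: "z > T" "0 < z" "besselJ nu z = 0" using Z_unbounded[OF nu] by blast
  define N0 where "N0 = rk nu z + 1"
  have zN: "z = bessel_zero nu N0" using zero_is_jz[OF nu, of z] z by (simp add: Zs_iff[OF nu] N0_def)
  have N1: "N0 \<ge> 1" by (simp add: N0_def)
  define Phi where "Phi = (\<lambda>n. bessel_zero nu n - pi * real n + 6 * E / bessel_zero nu n)"
  define Psi where "Psi = (\<lambda>n. bessel_zero nu n - pi * real n - 6 * E / bessel_zero nu n)"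
  have big: "bessel_zero nu n \<ge> T" if "n \<ge> N0" for n
    using jz_mono_le[OF nu N1 that] z zN by simp
  have mono: "Phi n \<le> Phi N0 \<and> Psi N0 \<le> Psi n" if "n \<ge> N0" for n
    using that
  proof (induction n rule: dec_induct)
    case base then show ?case by simp
  next
    case (step n)
    have n1: "1 \<le> n" using step.hyps N1 by simp
    have bg: "bessel_zero nu n \<ge> 4 * pi + 2 * E" using big step.hyps by (simp add: T_def)
    note st = jz_step[OF n1 bg[unfolded E_def], folded E_def]
    define J where "J = bessel_zero nu n"
    define s where "s = bessel_zero nu (n+1) - bessel_zero nu n"
    have J4: "J \<ge> 4 * pi" using bg E0 by (simp add: J_def)
    have nxt: "bessel_zero nu (Suc n) = J + s" by (simp add: J_def s_def)
    note si = step_ineq[OF J4 E0, of s, unfolded J_def s_def, OF st(3) st(1) st(2)]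
    have "Phi (Suc n) \<le> Phi n" unfolding Phi_def nxt[unfolded J_def s_def]
      using si(1) by (simp add: algebra_simps)
    moreover have "Psi n \<le> Psi (Suc n)" unfolding Psi_def nxt[unfolded J_def s_def]
      using si(2) by (simp add: algebra_simps)
    ultimately show ?case using step.IH by linarith
  qed
  define C where "C = \<bar>Phi N0\<bar> + \<bar>Psi N0\<bar> + (\<Sum>k\<le>N0. \<bar>bessel_zero nu k - pi * real k\<bar>)"
  have "\<bar>bessel_zero nu n - pi * real n\<bar> \<le> C" if n: "n \<ge> 1" for n
  proof (cases "n \<ge> N0")
    case True
    have p: "6 * E / bessel_zero nu n > 0" using E0 jz_pos[OF nu, of n] by simp
    have S: "(\<Sum>k\<le>N0. \<bar>bessel_zero nu k - pi * real k\<bar>) \<ge> 0" by (simp add: sum_nonneg)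
    have "bessel_zero nu n - pi * real n \<le> Phi N0" using mono[OF True] p by (simp add: Phi_def)
    moreover have "bessel_zero nu n - pi * real n \<ge> Psi N0" using mono[OF True] p by (simp add: Psi_def)
    ultimately show ?thesis using S unfolding C_def by linarith
  next
    case False
    then have "\<bar>bessel_zero nu n - pi * real n\<bar> \<le> (\<Sum>k\<le>N0. \<bar>bessel_zero nu k - pi * real k\<bar>)"
      by (intro member_le_sum) auto
    then show ?thesis unfolding C_def by linarith
  qed
  then show ?thesis by blast
qed

end

lemma growth:
  fixes Lam :: "nat \<Rightarrow> complex" and p s :: real
  assumes p: "p > 0" and s: "s > 0"
    and mono: "\<And>n m. 1 \<le> n \<Longrightarrow> n \<le> m \<Longrightarrow> cmod (Lam n) \<le> cmod (Lam m)"
    and pos: "\<And>n. 1 \<le> n \<Longrightarrow> cmod (Lam n) > 0"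
    and cnt: "\<forall>r>0. finite {n. 1 \<le> n \<and> cmod (Lam n) \<le> r} \<and>
        \<bar>p * sqrt r - real (card {n. 1 \<le> n \<and> cmod (Lam n) \<le> r})\<bar> \<le> s"
  shows "\<exists>\<rho>>0. \<exists>q>0. \<forall>n m. 1 \<le> n \<longrightarrow> 1 \<le> m \<longrightarrow> \<bar>real n - real m\<bar> \<ge> q \<longrightarrow>
            cmod (Lam n - Lam m) \<ge> \<rho> * \<bar>(real n)^2 - (real m)^2\<bar>"
proof -
  define a where "a = (\<lambda>n. sqrt (cmod (Lam n)))"
  have a0: "a n \<ge> 0" for n by (simp add: a_def)
  have lowA: "real n - s \<le> p * a n" if n: "1 \<le> n" for n
  proof -
    define R where "R = cmod (Lam n)"
    have R: "R > 0" using pos[OF n] by (simp add: R_def)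
    have sub: "{1..n} \<subseteq> {k. 1 \<le> k \<and> cmod (Lam k) \<le> R}" using mono unfolding R_def by auto
    have fin: "finite {k. 1 \<le> k \<and> cmod (Lam k) \<le> R}" using cnt R by blast
    have "real n \<le> real (card {k. 1 \<le> k \<and> cmod (Lam k) \<le> R})"
      using card_mono[OF fin sub] by simp
    moreover have "\<bar>p * sqrt R - real (card {k. 1 \<le> k \<and> cmod (Lam k) \<le> R})\<bar> \<le> s" using cnt R by blast
    ultimately show ?thesis unfolding a_def R_def by linarith
  qed
  have upA: "p * a n \<le> real n - 1 + s" if n: "1 \<le> n" for n
  proof (rule ccontr)
    assume "\<not> p * a n \<le> real n - 1 + s"
    then have lt: "real n - 1 + s < p * a n" by simp
    define t where "t = (real n - 1 + s) / p"
    have t0: "t > 0" using n s p by (simp add: t_def)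
    have ta: "t < a n" using lt p by (simp add: t_def field_simps mult.commute)
    define R where "R = cmod (Lam n)"
    have aR: "a n = sqrt R" by (simp add: a_def R_def)
    have R: "R > 0" using pos[OF n] by (simp add: R_def)
    have tR: "t^2 < R"
    proof -
      have "t^2 < (a n)^2" using t0 ta by (intro power_strict_mono) auto
      then show ?thesis using aR R by simp
    qed
    define r where "r = (t^2 + R) / 2"
    have "t^2 > 0" using t0 by simp
    have r1: "t^2 < r" using tR unfolding r_def by (simp add: field_simps)
    have r2: "r < R" using tR unfolding r_def by (simp add: field_simps)
    have r3: "r > 0" using r1 \<open>t^2 > 0\<close> by linarith
    note r = r1 r2 r3
    have sub: "{k. 1 \<le> k \<and> cmod (Lam k) \<le> r} \<subseteq> {1..n-1}"
    proof
      fix k assume k: "k \<in> {k. 1 \<le> k \<and> cmod (Lam k) \<le> r}"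
      have "\<not> n \<le> k"
      proof
        assume "n \<le> k"
        then have "R \<le> cmod (Lam k)" using mono[OF n] unfolding R_def by blast
        then show False using k r by simp
      qed
      then show "k \<in> {1..n-1}" using k by auto
    qed
    have "real (card {k. 1 \<le> k \<and> cmod (Lam k) \<le> r}) \<le> real (n - 1)"
      using card_mono[OF _ sub] by simp
    also have "\<dots> = real n - 1" using n by simp
    finally have c: "real (card {k. 1 \<le> k \<and> cmod (Lam k) \<le> r}) \<le> real n - 1" .
    have "\<bar>p * sqrt r - real (card {k. 1 \<le> k \<and> cmod (Lam k) \<le> r})\<bar> \<le> s" using cnt r by blast
    then have "p * sqrt r \<le> real n - 1 + s" using c by linarith
    then have "sqrt r \<le> t" using p by (simp add: t_def field_simps mult.commute)
    then have "r \<le> t^2" using r t0 by (metis real_sqrt_le_iff real_sqrt_unique less_imp_le)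
    then show False using r by simp
  qed
  define \<rho> where "\<rho> = 1 / (2 * p^2)"
  define q where "q = 4 * s"
  have key: "cmod (Lam m - Lam n) \<ge> \<rho> * ((real m)^2 - (real n)^2)"
    if nm: "1 \<le> n" "n < m" "real m - real n \<ge> q" for n m
  proof -
    have m1: "1 \<le> m" using nm by simp
    have am: "(real m - s) / p \<le> a m" using lowA[OF m1] p by (simp add: field_simps mult.commute)
    have an: "a n \<le> (real n + s) / p" using upA[OF nm(1)] p by (simp add: field_simps mult.commute)
    have ms: "real m - s \<ge> 0" using nm s unfolding q_def by linarith
    have A1: "((real m - s) / p)^2 \<le> (a m)^2" using am ms p by (intro power_mono) auto
    have A2: "(a n)^2 \<le> ((real n + s) / p)^2" using an a0 by (intro power_mono) auto
    have A3: "(a m)^2 = cmod (Lam m)" "(a n)^2 = cmod (Lam n)" by (simp_all add: a_def)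
    have A4: "((real m - s) / p)^2 - ((real n + s) / p)^2 = ((real m - s)^2 - (real n + s)^2) / p^2"
      unfolding power_divide by (rule diff_divide_distrib[symmetric])
    have d1: "cmod (Lam m) - cmod (Lam n) \<ge> ((real m - s)^2 - (real n + s)^2) / p^2"
      using A1 A2 A3 A4 by linarith
    have "(real m - s)^2 - (real n + s)^2 = (real m - real n - 2 * s) * (real m + real n)"
      by (simp add: power2_eq_square algebra_simps)
    also have "\<dots> \<ge> ((real m - real n) / 2) * (real m + real n)"
      using nm s unfolding q_def by (intro mult_right_mono) auto
    finally have "(real m - s)^2 - (real n + s)^2 \<ge> ((real m)^2 - (real n)^2) / 2"
      by (simp add: power2_eq_square algebra_simps)
    then have "((real m - s)^2 - (real n + s)^2) / p^2 \<ge> (((real m)^2 - (real n)^2) / 2) / p^2"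
      using p by (intro divide_right_mono) auto
    moreover have "(((real m)^2 - (real n)^2) / 2) / p^2 = \<rho> * ((real m)^2 - (real n)^2)"
      by (simp add: \<rho>_def)
    moreover have "cmod (Lam m - Lam n) \<ge> cmod (Lam m) - cmod (Lam n)" by (rule norm_triangle_ineq2)
    ultimately show ?thesis using d1 by linarith
  qed
  have rp: "\<rho> > 0" using p by (simp add: \<rho>_def)
  have qp: "q > 0" using s by (simp add: q_def)
  have main: "\<forall>n m. 1 \<le> n \<longrightarrow> 1 \<le> m \<longrightarrow> \<bar>real n - real m\<bar> \<ge> q \<longrightarrow>
            cmod (Lam n - Lam m) \<ge> \<rho> * \<bar>(real n)^2 - (real m)^2\<bar>"
  proof (intro allI impI)
    fix n m :: nat assume n: "1 \<le> n" and m: "1 \<le> m" and nm: "\<bar>real n - real m\<bar> \<ge> q"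
    have "n \<noteq> m" using nm s by (auto simp: q_def)
    then consider "n < m" | "m < n" by linarith
    then show "cmod (Lam n - Lam m) \<ge> \<rho> * \<bar>(real n)^2 - (real m)^2\<bar>"
    proof cases
      case 1
      then have "real m - real n \<ge> q" using nm by simp
      from key[OF n 1 this] have "cmod (Lam m - Lam n) \<ge> \<rho> * ((real m)^2 - (real n)^2)" .
      moreover have "\<bar>(real n)^2 - (real m)^2\<bar> = (real m)^2 - (real n)^2"
        using 1 by (simp add: power_strict_mono)
      ultimately show ?thesis by (simp add: norm_minus_commute)
    next
      case 2
      then have "real n - real m \<ge> q" using nm by simp
      from key[OF m 2 this] have "cmod (Lam n - Lam m) \<ge> \<rho> * ((real n)^2 - (real m)^2)" .
      moreover have "\<bar>(real n)^2 - (real m)^2\<bar> = (real n)^2 - (real m)^2"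
        using 2 by (simp add: power_strict_mono)
      ultimately show ?thesis by simp
    qed
  qed
  show ?thesis using rp qp main by blast
qed


locale seqs =
  fixes j :: "nat \<Rightarrow> real" and \<kappa> C \<sigma> :: real and L :: "nat \<Rightarrow> real"
  assumes jpos: "\<And>n. 1 \<le> n \<Longrightarrow> j n > 0"
    and jmono: "\<And>n m. 1 \<le> n \<Longrightarrow> n < m \<Longrightarrow> j n < j m"
    and jasym: "\<And>n. 1 \<le> n \<Longrightarrow> \<bar>j n - pi * real n\<bar> \<le> C"
    and sig: "\<sigma> > 0" and jsp: "\<And>n. 1 \<le> n \<Longrightarrow> j (n+1) - j n \<ge> \<sigma>"
    and kap: "\<kappa> > 0"
    and Ldef: "\<And>n. L n = \<kappa>^2 * (j n)^2"
begin

lemma C0: "C \<ge> 0" using jasym[of 1] by simp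

lemma Lpos: assumes "1 \<le> n" shows "L n > 0"
proof -
  have "j n > 0" using jpos assms by blast
  then show ?thesis using kap by (simp add: Ldef)
qed

lemma jgap: assumes "1 \<le> n" "n < m" shows "j m - j n \<ge> \<sigma>"
proof -
  have "j (n+1) \<le> j m" using jmono[of "n+1" m] assms by (cases "n + 1 = m") auto
  then show ?thesis using jsp[OF assms(1)] by simp
qed

lemma Lgap: assumes "1 \<le> n" "n < m" shows "L m - L n \<ge> \<kappa>^2 * \<sigma> * (j m + j n)"
proof -
  have "L m - L n = \<kappa>^2 * ((j m - j n) * (j m + j n))" by (simp add: Ldef algebra_simps power2_eq_square)
  moreover have "(j m - j n) * (j m + j n) \<ge> \<sigma> * (j m + j n)"
    using jgap[OF assms] jpos[OF assms(1)] jpos[of m] assms by (intro mult_right_mono) auto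
  ultimately show ?thesis using kap by (simp add: mult.assoc mult_left_mono)
qed

lemma Lmono: assumes "1 \<le> n" "n < m" shows "L n < L m"
proof -
  have "j n > 0" "j m > 0" using jpos assms by auto
  then have "\<kappa>^2 * \<sigma> * (j m + j n) > 0" using kap sig by simp
  then show ?thesis using Lgap[OF assms] by linarith
qed

lemma Lmono_le: "1 \<le> n \<Longrightarrow> n \<le> m \<Longrightarrow> L n \<le> L m"
  using Lmono[of n m] by (cases "n = m") auto

lemma L_le_iff: assumes "1 \<le> n" "R \<ge> 0" shows "L n \<le> R \<longleftrightarrow> j n \<le> sqrt R / \<kappa>"
proof -
  have "L n = (\<kappa> * j n)^2" by (simp add: Ldef power_mult_distrib)
  moreover have "\<kappa> * j n \<ge> 0" using kap jpos[OF assms(1)] by simp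
  ultimately have "L n \<le> R \<longleftrightarrow> \<kappa> * j n \<le> sqrt R"
    by (metis real_le_rsqrt real_sqrt_le_iff real_sqrt_unique)
  also have "\<dots> \<longleftrightarrow> j n \<le> sqrt R / \<kappa>" using kap by (simp add: field_simps)
  finally show ?thesis .
qed

lemma cnt_j:
  assumes y: "y \<ge> 0"
  shows "finite {n. 1 \<le> n \<and> j n \<le> y}"
    and "real (card {n. 1 \<le> n \<and> j n \<le> y}) \<le> (y + C) / pi"
    and "real (card {n. 1 \<le> n \<and> j n \<le> y}) \<ge> (y - C) / pi - 1"
proof -
  define k where "k = nat \<lfloor>(y + C) / pi\<rfloor>"
  define k' where "k' = nat \<lfloor>(y - C) / pi\<rfloor>"
  have sub: "{n. 1 \<le> n \<and> j n \<le> y} \<subseteq> {1..k}"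
  proof
    fix n assume n: "n \<in> {n. 1 \<le> n \<and> j n \<le> y}"
    then have "pi * real n \<le> y + C" using jasym[of n] by auto
    then have "real n \<le> (y + C) / pi" by (simp add: field_simps mult.commute)
    then have "n \<le> k" unfolding k_def by linarith
    then show "n \<in> {1..k}" using n by simp
  qed
  show fin: "finite {n. 1 \<le> n \<and> j n \<le> y}" using sub finite_subset by blast
  have "card {n. 1 \<le> n \<and> j n \<le> y} \<le> card {1..k}" using sub by (intro card_mono) auto
  then have "real (card {n. 1 \<le> n \<and> j n \<le> y}) \<le> real k" by simp
  also have "real k \<le> (y + C) / pi"
    using y C0 unfolding k_def by (simp add: of_nat_nat)
  finally show "real (card {n. 1 \<le> n \<and> j n \<le> y}) \<le> (y + C) / pi" .
  have sub2: "{1..k'} \<subseteq> {n. 1 \<le> n \<and> j n \<le> y}"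
  proof
    fix n assume n: "n \<in> {1..k'}"
    then have k1: "k' \<ge> 1" by simp
    then have "0 < k'" by simp
    then have "0 < \<lfloor>(y - C) / pi\<rfloor>" unfolding k'_def by simp
    then have "real k' = real_of_int \<lfloor>(y - C) / pi\<rfloor>" unfolding k'_def by (metis of_nat_nat less_imp_le)
    then have "real k' \<le> (y - C) / pi" using of_int_floor_le[of "(y - C) / pi"] by linarith
    then have "real n \<le> (y - C) / pi" using n by simp
    then have "pi * real n \<le> y - C" by (simp add: field_simps mult.commute)
    then have "j n \<le> y" using jasym[of n] n by auto
    then show "n \<in> {n. 1 \<le> n \<and> j n \<le> y}" using n by simp
  qed
  have "real k' \<le> real (card {n. 1 \<le> n \<and> j n \<le> y})"
    using card_mono[OF fin sub2] by simp
  moreover have "(y - C) / pi - 1 \<le> real k'" unfolding k'_def by linarith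
  ultimately show "real (card {n. 1 \<le> n \<and> j n \<le> y}) \<ge> (y - C) / pi - 1" by linarith
qed

definition "cntL R = card {n. 1 \<le> n \<and> L n \<le> R}"

lemma cntL_neg: "R < 0 \<Longrightarrow> {n. 1 \<le> n \<and> L n \<le> R} = {}"
  using Lpos by force

lemma cntL:
  assumes R: "R \<ge> 0"
  shows "finite {n. 1 \<le> n \<and> L n \<le> R}"
    and "\<bar>real (cntL R) - sqrt R / (\<kappa> * pi)\<bar> \<le> C / pi + 1"
proof -
  have eq: "{n. 1 \<le> n \<and> L n \<le> R} = {n. 1 \<le> n \<and> j n \<le> sqrt R / \<kappa>}"
    using L_le_iff R by auto
  have y: "sqrt R / \<kappa> \<ge> 0" using R kap by simp
  show "finite {n. 1 \<le> n \<and> L n \<le> R}" unfolding eq by (rule cnt_j(1)[OF y])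
  have a: "real (cntL R) \<le> (sqrt R / \<kappa> + C) / pi" unfolding cntL_def eq by (rule cnt_j(2)[OF y])
  have b: "real (cntL R) \<ge> (sqrt R / \<kappa> - C) / pi - 1" unfolding cntL_def eq by (rule cnt_j(3)[OF y])
  have e1: "(sqrt R / \<kappa> + C) / pi = sqrt R / (\<kappa> * pi) + C / pi" by (simp add: add_divide_distrib)
  have e2: "(sqrt R / \<kappa> - C) / pi = sqrt R / (\<kappa> * pi) - C / pi" by (simp add: diff_divide_distrib)
  have a': "real (cntL R) \<le> sqrt R / (\<kappa> * pi) + C / pi" using a unfolding e1 .
  have b': "real (cntL R) \<ge> sqrt R / (\<kappa> * pi) - C / pi - 1" using b unfolding e2 .
  show "\<bar>real (cntL R) - sqrt R / (\<kappa> * pi)\<bar> \<le> C / pi + 1"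
    by (intro abs_leI) (use a' b' in linarith)+
qed

lemma cntL_fin: "finite {n. 1 \<le> n \<and> L n \<le> R}"
proof (cases "R \<ge> 0")
  case True then show ?thesis using cntL(1) by blast
next
  case False
  then have "{n. 1 \<le> n \<and> L n \<le> R} = {}" using cntL_neg[of R] by simp
  then show ?thesis by (metis finite.emptyI)
qed

end

locale seqs2 = seqs +
  fixes d :: complex
  assumes Red: "Re d \<ge> 0"
    and gapd: "\<And>n l. 1 \<le> n \<Longrightarrow> 1 \<le> l \<Longrightarrow> n \<noteq> l \<Longrightarrow> complex_of_real (L n - L l) \<noteq> - d"
begin

definition "SA = {complex_of_real (L n) | n. 1 \<le> n}"
definition "SB = {complex_of_real (L n) + d | n. 1 \<le> n}"
definition "SS = SB \<union> SA"
definition "ltc z w = (cmod z < cmod w \<or> (cmod z = cmod w \<and> (Re z < Re w \<or> (Re z = Re w \<and> Im z < Im w))))"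
definition "rkS z = card {w\<in>SS. ltc w z}"
definition "Lam n = inv_into SS rkS (n - 1)"

lemma cmod_Bn: "L n \<le> cmod (complex_of_real (L n) + d)"
proof -
  have "Re (complex_of_real (L n) + d) \<le> cmod (complex_of_real (L n) + d)" by (rule complex_Re_le_cmod)
  then show ?thesis using Red by simp
qed

lemma cmod_Bn2: "1 \<le> n \<Longrightarrow> cmod (complex_of_real (L n) + d) \<le> L n + cmod d"
  using norm_triangle_ineq[of "complex_of_real (L n)" d] Lpos[of n] by simp

lemma cmod_An: "1 \<le> n \<Longrightarrow> cmod (complex_of_real (L n)) = L n"
  using Lpos[of n] by simp

lemma L_inj: "inj_on L {1..}"
proof (rule inj_onI)
  fix n m assume "n \<in> {1..}" "m \<in> {1..}" "L n = L m"
  then show "n = m" using Lmono[of n m] Lmono[of m n] by (metis atLeast_iff less_irrefl nat_neq_iff)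
qed

lemma SS_fin: "finite {z\<in>SS. cmod z \<le> r}"
proof -
  have "{z\<in>SS. cmod z \<le> r} \<subseteq> (\<lambda>n. complex_of_real (L n) + d) ` {n. 1 \<le> n \<and> L n \<le> r}
      \<union> (\<lambda>n. complex_of_real (L n)) ` {n. 1 \<le> n \<and> L n \<le> r}"
  proof
    fix z assume z: "z \<in> {z\<in>SS. cmod z \<le> r}"
    then consider (B) n where "1 \<le> n" "z = complex_of_real (L n) + d" | (A) n where "1 \<le> n" "z = complex_of_real (L n)"
      unfolding SS_def SA_def SB_def by blast
    then show "z \<in> (\<lambda>n. complex_of_real (L n) + d) ` {n. 1 \<le> n \<and> L n \<le> r}
      \<union> (\<lambda>n. complex_of_real (L n)) ` {n. 1 \<le> n \<and> L n \<le> r}"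
    proof cases
      case (B n) then show ?thesis using z cmod_Bn[of n] by auto
    next
      case (A n) then show ?thesis using z cmod_An[of n] by auto
    qed
  qed
  then show ?thesis using cntL_fin[of r] finite_subset by blast
qed

lemma SA_inf: "infinite SA"
proof -
  have "SA = (\<lambda>n. complex_of_real (L n)) ` {1..}" unfolding SA_def by auto
  moreover have "inj_on (\<lambda>n. complex_of_real (L n)) {1..}"
    using L_inj by (auto simp: inj_on_def)
  ultimately show ?thesis using infinite_Ici[of "1::nat"] finite_image_iff by metis
qed

lemma SS_inf: "infinite SS" using SA_inf unfolding SS_def by (meson finite_Un)

lemma rkS_props: "bij_betw rkS SS UNIV" "\<forall>x\<in>SS. \<forall>y\<in>SS. ltc x y \<longrightarrow> rkS x < rkS y"
proof -
  have i: "\<forall>x\<in>SS. \<not> ltc x x" by (simp add: ltc_def)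
  have t: "\<forall>x\<in>SS. \<forall>y\<in>SS. \<forall>z\<in>SS. ltc x y \<longrightarrow> ltc y z \<longrightarrow> ltc x z" by (auto simp: ltc_def)
  have o: "\<forall>x\<in>SS. \<forall>y\<in>SS. x \<noteq> y \<longrightarrow> ltc x y \<or> ltc y x"
    by (auto simp: ltc_def complex_eq_iff)
  have f: "\<forall>x\<in>SS. finite {y\<in>SS. ltc y x}"
  proof
    fix x assume "x \<in> SS"
    have "{y\<in>SS. ltc y x} \<subseteq> {y\<in>SS. cmod y \<le> cmod x}" by (auto simp: ltc_def)
    then show "finite {y\<in>SS. ltc y x}" using SS_fin finite_subset by blast
  qed
  note R = rank_props[of SS ltc, OF i t o f SS_inf]
  show "bij_betw rkS SS UNIV" using R(1) unfolding rkS_def by simp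
  show "\<forall>x\<in>SS. \<forall>y\<in>SS. ltc x y \<longrightarrow> rkS x < rkS y" using R(2) unfolding rkS_def by simp
qed

lemma Lam_in: "Lam n \<in> SS" and Lam_rk: "rkS (Lam n) = n - 1"
  using rkS_props(1) unfolding Lam_def
  by (auto intro: inv_into_into simp: bij_betw_def f_inv_into_f)

lemma Lam_bij: "bij_betw Lam {1..} SS"
proof -
  have b1: "bij_betw (\<lambda>n::nat. n - 1) {1..} UNIV"
  proof (rule bij_betwI[where g = "\<lambda>n. n + 1"]) qed auto
  have b2: "bij_betw (inv_into SS rkS) UNIV SS"
    using rkS_props(1) by (rule bij_betw_inv_into)
  have "bij_betw (inv_into SS rkS \<circ> (\<lambda>n. n - 1)) {1..} SS" by (rule bij_betw_trans[OF b1 b2])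
  then show ?thesis unfolding Lam_def[abs_def] by (simp add: comp_def)
qed

lemma Lam_inj: "1 \<le> n \<Longrightarrow> 1 \<le> m \<Longrightarrow> n \<noteq> m \<Longrightarrow> Lam n \<noteq> Lam m"
  using Lam_bij unfolding bij_betw_def inj_on_def by auto

lemma Lam_mono: assumes "1 \<le> n" "n \<le> m" shows "cmod (Lam n) \<le> cmod (Lam m)"
proof (rule ccontr)
  assume "\<not> cmod (Lam n) \<le> cmod (Lam m)"
  then have "ltc (Lam m) (Lam n)" by (simp add: ltc_def)
  then have "rkS (Lam m) < rkS (Lam n)" using rkS_props(2) Lam_in by blast
  then show False using Lam_rk[of m] Lam_rk[of n] assms by simp
qed

lemma SS_cases:
  assumes "z \<in> SS"
  obtains (B) n where "1 \<le> n" "z = complex_of_real (L n) + d" | (A) n where "1 \<le> n" "z = complex_of_real (L n)"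
  using assms unfolding SS_def SA_def SB_def by blast

lemma SS_Re: assumes "z \<in> SS" shows "Re z \<ge> L 1"
  using assms
proof (cases rule: SS_cases)
  case (B n) then show ?thesis using Lmono_le[of 1 n] Red by simp
next
  case (A n) then show ?thesis using Lmono_le[of 1 n] by simp
qed

lemma SS_Im: assumes "z \<in> SS" shows "\<bar>Im z\<bar> \<le> \<bar>Im d\<bar>"
  using assms by (cases rule: SS_cases) auto

lemma Lam_image: "Lam ` {1..} = SS" using Lam_bij by (simp add: bij_betw_def)

lemma N_eq:
  "finite {n. 1 \<le> n \<and> cmod (Lam n) \<le> r} \<and> card {n. 1 \<le> n \<and> cmod (Lam n) \<le> r} = card {z\<in>SS. cmod z \<le> r}"
proof -
  have eq: "{z\<in>SS. cmod z \<le> r} = Lam ` {n. 1 \<le> n \<and> cmod (Lam n) \<le> r}"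
  proof
    show "{z\<in>SS. cmod z \<le> r} \<subseteq> Lam ` {n. 1 \<le> n \<and> cmod (Lam n) \<le> r}"
    proof
      fix z assume z: "z \<in> {z\<in>SS. cmod z \<le> r}"
      then obtain n where "n \<in> {1..}" "z = Lam n" using Lam_image by blast
      then show "z \<in> Lam ` {n. 1 \<le> n \<and> cmod (Lam n) \<le> r}" using z by auto
    qed
    show "Lam ` {n. 1 \<le> n \<and> cmod (Lam n) \<le> r} \<subseteq> {z\<in>SS. cmod z \<le> r}"
      using Lam_in by auto
  qed
  have inj: "inj_on Lam {n. 1 \<le> n \<and> cmod (Lam n) \<le> r}"
    using Lam_bij unfolding bij_betw_def by (rule inj_on_subset[OF conjunct1]) auto
  show ?thesis
    using SS_fin[of r] unfolding eq using inj by (simp add: card_image finite_image_iff)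
qed

lemma cardA: "card {z\<in>SA. cmod z \<le> r} = cntL r"
proof -
  have eq: "{z\<in>SA. cmod z \<le> r} = (\<lambda>n. complex_of_real (L n)) ` {n. 1 \<le> n \<and> L n \<le> r}"
    unfolding SA_def using cmod_An by auto
  have "inj_on (\<lambda>n. complex_of_real (L n)) {n. 1 \<le> n \<and> L n \<le> r}"
    using L_inj by (auto simp: inj_on_def)
  then show ?thesis unfolding eq cntL_def by (rule card_image)
qed

definition "cB r = card {n. 1 \<le> n \<and> cmod (complex_of_real (L n) + d) \<le> r}"

lemma cardB: "card {z\<in>SB. cmod z \<le> r} = cB r"
proof -
  have eq: "{z\<in>SB. cmod z \<le> r} = (\<lambda>n. complex_of_real (L n) + d) ` {n. 1 \<le> n \<and> cmod (complex_of_real (L n) + d) \<le> r}"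
    unfolding SB_def by auto
  have "inj_on (\<lambda>n. complex_of_real (L n) + d) {n. 1 \<le> n \<and> cmod (complex_of_real (L n) + d) \<le> r}"
    using L_inj by (auto simp: inj_on_def)
  then show ?thesis unfolding eq cB_def by (rule card_image)
qed

lemma finA: "finite {z\<in>SA. cmod z \<le> r}"
  by (rule finite_subset[OF _ SS_fin[of r]]) (auto simp: SS_def)
lemma finB: "finite {z\<in>SB. cmod z \<le> r}"
  by (rule finite_subset[OF _ SS_fin[of r]]) (auto simp: SS_def)

lemma disj: "d \<noteq> 0 \<Longrightarrow> SA \<inter> SB = {}"
proof -
  assume d: "d \<noteq> 0"
  {
    fix n m assume nm: "1 \<le> n" "1 \<le> m" "complex_of_real (L n) = complex_of_real (L m) + d"
    have False
    proof (cases "n = m")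
      case True then show False using nm d by simp
    next
      case False
      then have "complex_of_real (L m - L n) \<noteq> - d" using gapd nm by blast
      then show False using nm by (simp add: algebra_simps)
    qed
  }
  then show ?thesis unfolding SA_def SB_def by blast
qed

lemma cB_bounds:
  assumes r: "r > 0"
  shows "\<bar>real (cB r) - sqrt r / (\<kappa> * pi)\<bar> \<le> (C / pi + 1) + sqrt (cmod d) / (\<kappa> * pi)"
proof -
  define s0 where "s0 = C / pi + 1"
  have s0: "s0 \<ge> 1" using C0 by (simp add: s0_def)
  have kp: "\<kappa> * pi > 0" using kap by simp
  have sub1: "{n. 1 \<le> n \<and> cmod (complex_of_real (L n) + d) \<le> r} \<subseteq> {n. 1 \<le> n \<and> L n \<le> r}"
    using cmod_Bn order_trans by blast
  have sub2: "{n. 1 \<le> n \<and> L n \<le> r - cmod d} \<subseteq> {n. 1 \<le> n \<and> cmod (complex_of_real (L n) + d) \<le> r}"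
    using cmod_Bn2 by force
  have finB': "finite {n. 1 \<le> n \<and> cmod (complex_of_real (L n) + d) \<le> r}"
    using sub1 cntL_fin finite_subset by blast
  have up: "real (cB r) \<le> real (cntL r)"
    unfolding cB_def cntL_def using card_mono[OF cntL_fin sub1] by simp
  have lo: "real (cntL (r - cmod d)) \<le> real (cB r)"
    unfolding cB_def cntL_def using card_mono[OF finB' sub2] by simp
  have "real (cntL r) \<le> sqrt r / (\<kappa> * pi) + s0" using cntL(2)[of r] r unfolding s0_def by linarith
  with up have U: "real (cB r) \<le> sqrt r / (\<kappa> * pi) + s0" by linarith
  have L: "real (cB r) \<ge> sqrt r / (\<kappa> * pi) - s0 - sqrt (cmod d) / (\<kappa> * pi)"
  proof (cases "r \<ge> cmod d")
    case True
    have "real (cntL (r - cmod d)) \<ge> sqrt (r - cmod d) / (\<kappa> * pi) - s0"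
      using cntL(2)[of "r - cmod d"] True unfolding s0_def by linarith
    moreover have "sqrt r \<le> sqrt (r - cmod d) + sqrt (cmod d)"
      using sqrt_add_le_add_sqrt[of "r - cmod d" "cmod d"] True by simp
    then have "sqrt r / (\<kappa> * pi) \<le> sqrt (r - cmod d) / (\<kappa> * pi) + sqrt (cmod d) / (\<kappa> * pi)"
      using kp by (simp add: add_divide_distrib[symmetric] divide_right_mono)
    ultimately show ?thesis using lo by linarith
  next
    case False
    then have "sqrt r \<le> sqrt (cmod d)" by simp
    then have "sqrt r / (\<kappa> * pi) \<le> sqrt (cmod d) / (\<kappa> * pi)" using kp by (simp add: divide_right_mono)
    then show ?thesis using s0 by simp
  qed
  have D: "sqrt (cmod d) / (\<kappa> * pi) \<ge> 0" using kp by simp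
  show ?thesis using U L D unfolding s0_def by (intro abs_leI; linarith)
qed

lemma count_bound:
  "\<exists>p>0. \<exists>s>0. \<forall>r>0. finite {n. 1 \<le> n \<and> cmod (Lam n) \<le> r} \<and>
      \<bar>p * sqrt r - real (card {n. 1 \<le> n \<and> cmod (Lam n) \<le> r})\<bar> \<le> s"
proof -
  define p0 where "p0 = 1 / (\<kappa> * pi)"
  define s0 where "s0 = C / pi + 1"
  have p0: "p0 > 0" using kap by (simp add: p0_def)
  have s0: "s0 \<ge> 1" using C0 by (simp add: s0_def)
  have pe: "sqrt r / (\<kappa> * pi) = p0 * sqrt r" for r by (simp add: p0_def)
  show ?thesis
  proof (cases "d = 0")
    case True
    then have "SB = SA" unfolding SA_def SB_def by simp
    then have SSA: "SS = SA" unfolding SS_def by simp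
    have "\<forall>r>0. finite {n. 1 \<le> n \<and> cmod (Lam n) \<le> r} \<and>
      \<bar>p0 * sqrt r - real (card {n. 1 \<le> n \<and> cmod (Lam n) \<le> r})\<bar> \<le> s0"
    proof (intro allI impI conjI)
      fix r :: real assume r: "r > 0"
      show "finite {n. 1 \<le> n \<and> cmod (Lam n) \<le> r}" using N_eq by blast
      have "card {n. 1 \<le> n \<and> cmod (Lam n) \<le> r} = cntL r" using N_eq[of r] cardA[of r] SSA by simp
      then show "\<bar>p0 * sqrt r - real (card {n. 1 \<le> n \<and> cmod (Lam n) \<le> r})\<bar> \<le> s0"
        using cntL(2)[of r] r unfolding pe s0_def by (simp add: abs_minus_commute)
    qed
    moreover have "s0 > 0" using s0 by simp
    ultimately show ?thesis using p0 by blast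
  next
    case False
    define s1 where "s1 = 2 * s0 + p0 * sqrt (cmod d)"
    have s1: "s1 > 0" using s0 p0 by (simp add: s1_def add_pos_nonneg)
    have "\<forall>r>0. finite {n. 1 \<le> n \<and> cmod (Lam n) \<le> r} \<and>
      \<bar>(2 * p0) * sqrt r - real (card {n. 1 \<le> n \<and> cmod (Lam n) \<le> r})\<bar> \<le> s1"
    proof (intro allI impI conjI)
      fix r :: real assume r: "r > 0"
      show "finite {n. 1 \<le> n \<and> cmod (Lam n) \<le> r}" using N_eq by blast
      have "{z\<in>SS. cmod z \<le> r} = {z\<in>SA. cmod z \<le> r} \<union> {z\<in>SB. cmod z \<le> r}" unfolding SS_def by auto
      then have "card {z\<in>SS. cmod z \<le> r} = card {z\<in>SA. cmod z \<le> r} + card {z\<in>SB. cmod z \<le> r}"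
        using card_Un_disjoint[OF finA finB] disj[OF False] by auto
      then have ceq: "card {n. 1 \<le> n \<and> cmod (Lam n) \<le> r} = cntL r + cB r"
        using N_eq[of r] cardA[of r] cardB[of r] by simp
      have a: "\<bar>real (cntL r) - p0 * sqrt r\<bar> \<le> s0" using cntL(2)[of r] r unfolding pe s0_def by simp
      have b: "\<bar>real (cB r) - p0 * sqrt r\<bar> \<le> s0 + p0 * sqrt (cmod d)"
        using cB_bounds[OF r] unfolding pe s0_def by (simp add: p0_def)
      show "\<bar>(2 * p0) * sqrt r - real (card {n. 1 \<le> n \<and> cmod (Lam n) \<le> r})\<bar> \<le> s1"
        unfolding ceq s1_def using a b by (simp add: abs_le_iff)
    qed
    moreover have "2 * p0 > 0" using p0 by simp
    ultimately show ?thesis using s1 by blast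
  qed
qed

lemma Ldiff: assumes "1 \<le> n" "1 \<le> m" "n \<noteq> m"
  shows "\<bar>L n - L m\<bar> \<ge> \<kappa>^2 * \<sigma> * (j n + j m)"
proof (cases "n < m")
  case True then show ?thesis using Lgap[OF assms(1) True] by (simp add: add.commute)
next
  case False then have "m < n" using assms by simp
  then show ?thesis using Lgap[OF assms(2), of n] by simp
qed

lemma separation: "\<exists>c>0. \<forall>z\<in>SS. \<forall>w\<in>SS. z \<noteq> w \<longrightarrow> cmod (z - w) \<ge> c"
proof -
  define g where "g = \<kappa>^2 * \<sigma>"
  have g: "g > 0" using kap sig by (simp add: g_def)
  define c1 where "c1 = g * j 1"
  have c1: "c1 > 0" using g jpos[of 1] by (simp add: c1_def)
  have AA: "cmod (complex_of_real (L n) - complex_of_real (L m)) \<ge> c1"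
    if "1 \<le> n" "1 \<le> m" "n \<noteq> m" for n m
  proof -
    have "j n \<ge> j 1" "j m \<ge> j 1" using jmono[of 1 n] jmono[of 1 m] that by (auto simp: le_less)
    moreover have "j 1 > 0" using jpos by simp
    moreover have "j n > 0" "j m > 0" using jpos that by auto
    ultimately have "j 1 \<le> j n + j m" by linarith
    then have "g * (j n + j m) \<ge> g * j 1" using g by (intro mult_left_mono) auto
    then have "\<bar>L n - L m\<bar> \<ge> c1" using Ldiff[OF that] unfolding c1_def g_def by linarith
    then show ?thesis by (simp add: norm_of_real[symmetric] of_real_diff[symmetric] del: of_real_diff)
  qed
  show ?thesis
  proof (cases "d = 0")
    case True
    then have SSA: "SS = SA" unfolding SS_def SA_def SB_def by auto
    show ?thesis
    proof (intro exI[of _ c1] conjI ballI impI)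
      fix z w assume "z \<in> SS" "w \<in> SS" "z \<noteq> w"
      then obtain n m where "1 \<le> n" "1 \<le> m" "z = complex_of_real (L n)" "w = complex_of_real (L m)"
        unfolding SSA SA_def by blast
      then show "cmod (z - w) \<ge> c1" using AA \<open>z \<noteq> w\<close> by blast
    qed (rule c1)
  next
    case False
    have dpos: "cmod d > 0" using False by simp
    define K where "K = nat \<lceil>(2 * cmod d / g + C) / pi\<rceil>"
    have bigk: "j k > 2 * cmod d / g" if "1 \<le> k" "k > K" for k
    proof -
      have "(2 * cmod d / g + C) / pi \<le> real K" unfolding K_def by (rule real_nat_ceiling_ge)
      moreover have "real K < real k" using that by simp
      ultimately have "real k > (2 * cmod d / g + C) / pi" by linarith
      then have "pi * real k > 2 * cmod d / g + C" by (simp add: field_simps mult.commute)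
      then show ?thesis using jasym[OF that(1)] by linarith
    qed
    define F where "F = (\<lambda>(n, m). cmod (complex_of_real (L n - L m) + d)) ` (({1..K} \<times> {1..K}) \<inter> {(n, m). n \<noteq> m})"
    define c2 where "c2 = Min (insert (cmod d) F)"
    have Ffin: "finite F" unfolding F_def
      by (rule finite_imageI, rule finite_subset[of _ "{1..K} \<times> {1..K}"]) auto
    have Fpos: "\<forall>x\<in>F. x > 0"
    proof
      fix x assume "x \<in> F"
      then obtain nm where nmI: "nm \<in> ({1..K} \<times> {1..K}) \<inter> {(n, m). n \<noteq> m}"
        and xe: "x = (\<lambda>(n, m). cmod (complex_of_real (L n - L m) + d)) nm"
        unfolding F_def by blast
      obtain n m where nmp: "nm = (n, m)" by (cases nm)
      have nm: "1 \<le> n" "1 \<le> m" "n \<noteq> m" "x = cmod (complex_of_real (L n - L m) + d)"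
        using nmI xe unfolding nmp by auto
      have "complex_of_real (L n - L m) + d \<noteq> 0"
      proof
        assume "complex_of_real (L n - L m) + d = 0"
        then have "complex_of_real (L n - L m) = - d" by (simp add: eq_neg_iff_add_eq_0)
        then show False using gapd[OF nm(1-3)] by blast
      qed
      then show "x > 0" using nm by simp
    qed
    have c2: "c2 > 0" unfolding c2_def using Ffin Fpos dpos by (subst Min_gr_iff) auto
    have c2d: "c2 \<le> cmod d" unfolding c2_def using Ffin by simp
    have c2F: "c2 \<le> x" if "x \<in> F" for x unfolding c2_def using Ffin that by simp
    have AB: "cmod (complex_of_real (L n - L m) + d) \<ge> c2" if nm: "1 \<le> n" "1 \<le> m" for n m
    proof (cases "n = m")
      case True then show ?thesis using c2d by simp
    next
      case False
      show ?thesis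
      proof (cases "n \<le> K \<and> m \<le> K")
        case True
        then have "(n, m) \<in> ({1..K} \<times> {1..K}) \<inter> {(n, m). n \<noteq> m}" using nm False by auto
        then have "cmod (complex_of_real (L n - L m) + d) \<in> F" unfolding F_def
          by (rule rev_image_eqI) simp
        then show ?thesis using c2F by blast
      next
        case out: False
        have "j n + j m > 2 * cmod d / g"
        proof (cases "n > K")
          case True then show ?thesis using bigk[OF nm(1) True] jpos[OF nm(2)] by linarith
        next
          case False then have "m > K" using out by simp
          then show ?thesis using bigk[OF nm(2)] jpos[OF nm(1)] by linarith
        qed
        then have "g * (j n + j m) > g * (2 * cmod d / g)" using g by (intro mult_strict_left_mono) auto
        moreover have "g * (2 * cmod d / g) = 2 * cmod d" using g by simp
        ultimately have "g * (j n + j m) > 2 * cmod d" by simp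
        then have "\<bar>L n - L m\<bar> > 2 * cmod d" using Ldiff[OF nm False] unfolding g_def by linarith
        moreover have "cmod (complex_of_real (L n - L m)) = \<bar>L n - L m\<bar>" by (rule norm_of_real)
        moreover have "cmod (complex_of_real (L n - L m) + d) \<ge> \<bar>L n - L m\<bar> - cmod d"
          using norm_diff_ineq[of "complex_of_real (L n - L m)" d] calculation(2) by linarith
        ultimately show ?thesis using c2d by linarith
      qed
    qed
    show ?thesis
    proof (intro exI[of _ "min c1 c2"] conjI ballI impI)
      show "min c1 c2 > 0" using c1 c2 by simp
      fix z w assume zw: "z \<in> SS" "w \<in> SS" "z \<noteq> w"
      from zw(1) show "cmod (z - w) \<ge> min c1 c2"
      proof (cases rule: SS_cases)
        case (B n)
        from zw(2) show ?thesis
        proof (cases rule: SS_cases)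
          case (B m)
          then have "n \<noteq> m" using zw \<open>z = _\<close> by auto
          then show ?thesis using AA[OF \<open>1 \<le> n\<close> \<open>1 \<le> m\<close>] \<open>z = _\<close> \<open>w = _\<close> by simp
        next
          case (A m)
          then show ?thesis using AB[OF \<open>1 \<le> n\<close> \<open>1 \<le> m\<close>] \<open>z = _\<close> by (simp add: algebra_simps)
        qed
      next
        case (A n)
        from zw(2) show ?thesis
        proof (cases rule: SS_cases)
          case (B m)
          have "cmod (z - w) = cmod (w - z)" by (rule norm_minus_commute)
          also have "w - z = complex_of_real (L m - L n) + d"
            using \<open>z = _\<close> \<open>w = _\<close> by simp
          finally have "cmod (z - w) = cmod (complex_of_real (L m - L n) + d)" .
          then show ?thesis using AB[OF \<open>1 \<le> m\<close> \<open>1 \<le> n\<close>] by simp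
        next
          case (A m)
          then have "n \<noteq> m" using zw \<open>z = _\<close> by auto
          then show ?thesis using AA[OF \<open>1 \<le> n\<close> \<open>1 \<le> m\<close>] \<open>z = _\<close> \<open>w = _\<close> by simp
        qed
      qed
    qed
  qed
qed

end

context seqs2
begin

lemma final:
  "\<exists>\<Lambda> :: nat \<Rightarrow> complex.
     bij_betw \<Lambda> {1..} ({complex_of_real (L n) + d | n. 1 \<le> n} \<union> {complex_of_real (L n) | n. 1 \<le> n})
   \<and> (\<forall>n m. 1 \<le> n \<longrightarrow> 1 \<le> m \<longrightarrow> n \<noteq> m \<longrightarrow> \<Lambda> n \<noteq> \<Lambda> m)
   \<and> (\<forall>n. 1 \<le> n \<longrightarrow> Re (\<Lambda> n) > 0)
   \<and> (\<exists>\<delta>>0. \<forall>n. 1 \<le> n \<longrightarrow> \<bar>Im (\<Lambda> n)\<bar> \<le> \<delta> * sqrt (Re (\<Lambda> n)))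
   \<and> (\<forall>n. 1 \<le> n \<longrightarrow> cmod (\<Lambda> n) \<le> cmod (\<Lambda> (n + 1)))
   \<and> (\<exists>\<rho>>0. \<exists>q>0.
        (\<forall>n m. 1 \<le> n \<longrightarrow> 1 \<le> m \<longrightarrow> \<bar>real n - real m\<bar> \<ge> q \<longrightarrow>
            cmod (\<Lambda> n - \<Lambda> m) \<ge> \<rho> * \<bar>(real n)^2 - (real m)^2\<bar>)
      \<and> (\<exists>c>0. \<forall>n m. 1 \<le> n \<longrightarrow> 1 \<le> m \<longrightarrow> n \<noteq> m \<longrightarrow> \<bar>real n - real m\<bar> < q \<longrightarrow>
            cmod (\<Lambda> n - \<Lambda> m) \<ge> c))
   \<and> (\<exists>p>0. \<exists>s>0. \<forall>r>0.
        finite {n. 1 \<le> n \<and> cmod (\<Lambda> n) \<le> r} \<and>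
        \<bar>p * sqrt r - real (card {n. 1 \<le> n \<and> cmod (\<Lambda> n) \<le> r})\<bar> \<le> s)"
proof -
  have L1: "L 1 > 0" using Lpos by simp
  have bij: "bij_betw Lam {1..} ({complex_of_real (L n) + d | n. 1 \<le> n} \<union> {complex_of_real (L n) | n. 1 \<le> n})"
    using Lam_bij unfolding SS_def SA_def SB_def .
  have inj: "\<forall>n m. 1 \<le> n \<longrightarrow> 1 \<le> m \<longrightarrow> n \<noteq> m \<longrightarrow> Lam n \<noteq> Lam m" using Lam_inj by blast
  have re: "\<forall>n. 1 \<le> n \<longrightarrow> Re (Lam n) > 0" using SS_Re[OF Lam_in] L1 by (meson less_le_trans)
  have im: "\<exists>\<delta>>0. \<forall>n. 1 \<le> n \<longrightarrow> \<bar>Im (Lam n)\<bar> \<le> \<delta> * sqrt (Re (Lam n))"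
  proof (intro exI[of _ "\<bar>Im d\<bar> / sqrt (L 1) + 1"] conjI allI impI)
    show "\<bar>Im d\<bar> / sqrt (L 1) + 1 > 0" using L1 by (simp add: add_nonneg_pos)
    fix n :: nat assume "1 \<le> n"
    have sL: "sqrt (L 1) > 0" using L1 by simp
    have "\<bar>Im (Lam n)\<bar> \<le> \<bar>Im d\<bar>" by (rule SS_Im[OF Lam_in])
    also have "\<bar>Im d\<bar> \<le> (\<bar>Im d\<bar> / sqrt (L 1) + 1) * sqrt (L 1)"
      using sL by (simp add: algebra_simps)
    also have "\<dots> \<le> (\<bar>Im d\<bar> / sqrt (L 1) + 1) * sqrt (Re (Lam n))"
      using SS_Re[OF Lam_in, of n] sL by (intro mult_left_mono) (auto simp: add_nonneg_nonneg)
    finally show "\<bar>Im (Lam n)\<bar> \<le> (\<bar>Im d\<bar> / sqrt (L 1) + 1) * sqrt (Re (Lam n))" .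
  qed
  have mono: "\<forall>n. 1 \<le> n \<longrightarrow> cmod (Lam n) \<le> cmod (Lam (n + 1))" using Lam_mono by simp
  obtain p s where ps: "p > 0" "s > 0" and cnt: "\<forall>r>0. finite {n. 1 \<le> n \<and> cmod (Lam n) \<le> r} \<and>
        \<bar>p * sqrt r - real (card {n. 1 \<le> n \<and> cmod (Lam n) \<le> r})\<bar> \<le> s"
    using count_bound by blast
  have pos: "cmod (Lam n) > 0" if "1 \<le> n" for n
    using re that complex_Re_le_cmod[of "Lam n"] by (meson less_le_trans)
  obtain \<rho> q where rq: "\<rho> > 0" "q > 0" and gr: "\<forall>n m. 1 \<le> n \<longrightarrow> 1 \<le> m \<longrightarrow> \<bar>real n - real m\<bar> \<ge> q \<longrightarrow>
            cmod (Lam n - Lam m) \<ge> \<rho> * \<bar>(real n)^2 - (real m)^2\<bar>"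
    using growth[OF ps Lam_mono pos cnt] by blast
  obtain c where c: "c > 0" "\<forall>z\<in>SS. \<forall>w\<in>SS. z \<noteq> w \<longrightarrow> cmod (z - w) \<ge> c"
    using separation by blast
  have sep: "\<forall>n m. 1 \<le> n \<longrightarrow> 1 \<le> m \<longrightarrow> n \<noteq> m \<longrightarrow> \<bar>real n - real m\<bar> < q \<longrightarrow> cmod (Lam n - Lam m) \<ge> c"
    using c(2) Lam_in Lam_inj by blast
  show ?thesis
    apply (rule exI[of _ Lam])
    using bij inj re im mono rq gr c(1) sep ps cnt by blast
qed

end


theorem proposition3p5:
  fixes alpha mu a1 a2 :: real
  assumes "0 \<le> alpha" and "alpha < 1"
    and "mu \<le> mu_crit alpha"
    and gap: "\<forall>n l. 1 \<le> n \<longrightarrow> 1 \<le> l \<longrightarrow> n \<noteq> l \<longrightarrow>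
               complex_of_real (lam alpha mu n - lam alpha mu l) \<noteq> eig1 a1 a2 - eig2 a1 a2"
  shows "\<exists>\<Lambda> :: nat \<Rightarrow> complex.
     bij_betw \<Lambda> {1..}
       ({complex_of_real (lam alpha mu n) - eig1 a1 a2 + eig2 a1 a2 | n. 1 \<le> n}
        \<union> {complex_of_real (lam alpha mu n) | n. 1 \<le> n})
   \<and> (\<forall>n m. 1 \<le> n \<longrightarrow> 1 \<le> m \<longrightarrow> n \<noteq> m \<longrightarrow> \<Lambda> n \<noteq> \<Lambda> m)
   \<and> (\<forall>n. 1 \<le> n \<longrightarrow> Re (\<Lambda> n) > 0)
   \<and> (\<exists>\<delta>>0. \<forall>n. 1 \<le> n \<longrightarrow> \<bar>Im (\<Lambda> n)\<bar> \<le> \<delta> * sqrt (Re (\<Lambda> n)))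
   \<and> (\<forall>n. 1 \<le> n \<longrightarrow> cmod (\<Lambda> n) \<le> cmod (\<Lambda> (n + 1)))
   \<and> (\<exists>\<rho>>0. \<exists>q>0.
        (\<forall>n m. 1 \<le> n \<longrightarrow> 1 \<le> m \<longrightarrow> \<bar>real n - real m\<bar> \<ge> q \<longrightarrow>
            cmod (\<Lambda> n - \<Lambda> m) \<ge> \<rho> * \<bar>(real n)^2 - (real m)^2\<bar>)
      \<and> (\<exists>c>0. \<forall>n m. 1 \<le> n \<longrightarrow> 1 \<le> m \<longrightarrow> n \<noteq> m \<longrightarrow> \<bar>real n - real m\<bar> < q \<longrightarrow>
            cmod (\<Lambda> n - \<Lambda> m) \<ge> c))
   \<and> (\<exists>p>0. \<exists>s>0. \<forall>r>0.
        finite {n. 1 \<le> n \<and> cmod (\<Lambda> n) \<le> r} \<and>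
        \<bar>p * sqrt r - real (card {n. 1 \<le> n \<and> cmod (\<Lambda> n) \<le> r})\<bar> \<le> s)"
proof -
  define nu where "nu = nu_of alpha mu"
  have "2 / (2 - alpha) > 0" using assms(2) by simp
  moreover have "sqrt (mu_crit alpha - mu) \<ge> 0" using assms(3) by simp
  ultimately have nu: "nu \<ge> 0" unfolding nu_def nu_of_def by (intro mult_nonneg_nonneg) auto
  define \<kappa> where "\<kappa> = (2 - alpha) / 2"
  have kap: "\<kappa> > 0" unfolding \<kappa>_def using assms(2) by simp
  obtain C where C: "\<forall>n\<ge>1. \<bar>bessel_zero nu n - pi * real n\<bar> \<le> C" using jz_asymp[OF nu] by blast
  obtain \<sigma> where sig: "\<sigma> > 0" "\<forall>n\<ge>1. bessel_zero nu (n+1) - bessel_zero nu n \<ge> \<sigma>"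
    using jz_spacing[OF nu] by blast
  define d where "d = eig2 a1 a2 - eig1 a1 a2"
  have Red: "Re d \<ge> 0" unfolding d_def eig1_def eig2_def by auto
  interpret S: seqs2 "bessel_zero nu" \<kappa> C \<sigma> "lam alpha mu" d
  proof
    show "\<And>n. 1 \<le> n \<Longrightarrow> bessel_zero nu n > 0" using jz_pos[OF nu] by blast
    show "\<And>n m. 1 \<le> n \<Longrightarrow> n < m \<Longrightarrow> bessel_zero nu n < bessel_zero nu m" using jz_mono[OF nu] by blast
    show "\<And>n. 1 \<le> n \<Longrightarrow> \<bar>bessel_zero nu n - pi * real n\<bar> \<le> C" using C by blast
    show "\<sigma> > 0" by (rule sig(1))
    show "\<And>n. 1 \<le> n \<Longrightarrow> bessel_zero nu (n+1) - bessel_zero nu n \<ge> \<sigma>" using sig(2) by blast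
    show "\<kappa> > 0" by (rule kap)
    show "\<And>n. lam alpha mu n = \<kappa>^2 * (bessel_zero nu n)^2" by (simp add: lam_def \<kappa>_def nu_def)
    show "Re d \<ge> 0" by (rule Red)
    show "\<And>n l. 1 \<le> n \<Longrightarrow> 1 \<le> l \<Longrightarrow> n \<noteq> l \<Longrightarrow> complex_of_real (lam alpha mu n - lam alpha mu l) \<noteq> - d"
      using gap unfolding d_def by simp
  qed
  have seteq: "{complex_of_real (lam alpha mu n) - eig1 a1 a2 + eig2 a1 a2 | n. 1 \<le> n}
      = {complex_of_real (lam alpha mu n) + d | n. 1 \<le> n}"
    by (simp add: d_def algebra_simps)
  show ?thesis unfolding seteq by (rule S.final)
qed


end
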